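(* Let $d\ge1$, $p\ge2$, $n<\infty$, and let $\{\xi(i,m):1\le i\le n,1\le m\le d\}$ be mutually independent centered random variables with $\mu_m(p)<\infty$ for all $m$. Then $$\sup_{b\in B(d,n)}|Q_d|_p\le 2^{d/2}\,\frac{p^d}{\log p}\prod_{m=1}^d\mu_m(p).$$
   Context: $I(d,n)=\{(i_1,\dots,i_d):1\le i_1<\dots<i_d\le n\}$, $\xi(I)=\prod_m\xi(i_m,m)$, $Q_d=\sum_{I\in I(d,n)}b(I)\xi(I)$, $B(d,n)=\{b:\sum_Ib(I)^2=1\}$. $|\eta|_p=(\mathbf E|\eta|^p)^{1/p}$, $\mu_m(p)=\sup_i|\xi(i,m)|_p$. *)

theory Defs
  imports "HOL-Probability.Probability"
begin

definition Idx :: "nat \<Rightarrow> nat \<Rightarrow> nat list set" where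
  "Idx d n = {xs. length xs = d \<and> sorted_wrt (<) xs \<and> set xs \<subseteq> {1..n}}"

definition xiI :: "(nat \<Rightarrow> nat \<Rightarrow> 'a \<Rightarrow> real) \<Rightarrow> nat \<Rightarrow> nat list \<Rightarrow> 'a \<Rightarrow> real" where
  "xiI \<xi> d I x = (\<Prod>m\<in>{1..d}. \<xi> (I ! (m - 1)) m x)"

definition Qd :: "(nat \<Rightarrow> nat \<Rightarrow> 'a \<Rightarrow> real) \<Rightarrow> nat \<Rightarrow> nat \<Rightarrow> (nat list \<Rightarrow> real) \<Rightarrow> 'a \<Rightarrow> real" where
  "Qd \<xi> d n b x = (\<Sum>I\<in>Idx d n. b I * xiI \<xi> d I x)"

definition Bset :: "nat \<Rightarrow> nat \<Rightarrow> (nat list \<Rightarrow> real) set" where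
  "Bset d n = {b. (\<Sum>I\<in>Idx d n. (b I)\<^sup>2) = 1}"

definition Lpn :: "'a measure \<Rightarrow> real \<Rightarrow> ('a \<Rightarrow> real) \<Rightarrow> real" where
  "Lpn M p \<eta> = (\<integral>x. \<bar>\<eta> x\<bar> powr p \<partial>M) powr (1 / p)"

definition mu :: "'a measure \<Rightarrow> (nat \<Rightarrow> nat \<Rightarrow> 'a \<Rightarrow> real) \<Rightarrow> nat \<Rightarrow> nat \<Rightarrow> real \<Rightarrow> real" where
  "mu M \<xi> n m p = (SUP i\<in>{1..n}. Lpn M p (\<xi> i m))"

end

theory Submission
  imports Defs
begin


lemma bern_pos:
  fixes r v :: real
  assumes r: "r \<ge> 1 \<or> r \<le> 0" and v: "v \<ge> 0"
  shows "1 + r * v \<le> (1 + v) powr r"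
proof -
  let ?k = "\<lambda>x. (1 + x) powr r - 1 - r * x"
  have "?k 0 \<le> ?k v"
  proof (rule DERIV_nonneg_imp_nondecreasing[OF v])
    fix x assume x: "0 \<le> x" "x \<le> v"
    have d: "DERIV ?k x :> r * (1 + x) powr (r - 1) - r"
      using x by (auto intro!: derivative_eq_intros)
    have "0 \<le> r * (1 + x) powr (r - 1) - r"
    proof (cases "r \<ge> 1")
      case True
      then have "1 \<le> (1 + x) powr (r - 1)" using x by (intro ge_one_powr_ge_zero) auto
      then show ?thesis using True by (simp add: algebra_simps)
    next
      case False
      then have "r \<le> 0" using r by auto
      have "(1 + x) powr (r - 1) \<le> (1 + x) powr 0" using x \<open>r \<le> 0\<close> by (intro powr_mono) auto
      then have "(1 + x) powr (r - 1) \<le> 1" using x by simp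
      then show ?thesis using \<open>r \<le> 0\<close> by (simp add: algebra_simps mult_le_cancel_left1)
    qed
    then show "\<exists>y. DERIV ?k x :> y \<and> 0 \<le> y" using d by blast
  qed
  then show ?thesis by simp
qed

lemma bern_neg:
  fixes r v :: real
  assumes r: "r \<ge> 1" and v: "-1 < v" "v \<le> 0"
  shows "1 + r * v \<le> (1 + v) powr r"
proof -
  let ?k = "\<lambda>x. (1 + x) powr r - 1 - r * x"
  have "?k 0 \<le> ?k v"
  proof (rule DERIV_nonpos_imp_nonincreasing[OF v(2)])
    fix x assume x: "v \<le> x" "x \<le> 0"
    have d: "DERIV ?k x :> r * (1 + x) powr (r - 1) - r"
      using x v by (auto intro!: derivative_eq_intros)
    have "(1 + x) powr (r - 1) \<le> 1" using x v r by (intro powr_le1) auto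
    then have "r * (1 + x) powr (r - 1) - r \<le> 0" using r by (simp add: algebra_simps mult_le_cancel_left1)
    then show "\<exists>y. DERIV ?k x :> y \<and> y \<le> 0" using d by blast
  qed
  then show ?thesis by simp
qed

lemma superadd:
  fixes q u :: real
  assumes q: "q \<ge> 1" and u: "u \<ge> 0"
  shows "1 + u powr q \<le> (1 + u) powr q"
proof -
  define s where "s = 1 + u"
  have s: "s > 0" "s \<ge> 1" using u by (auto simp: s_def)
  have le: "x powr q \<le> x" if "0 \<le> x" "x \<le> 1" for x :: real
  proof -
    have "x powr q \<le> x powr 1" using that q by (intro powr_mono') auto
    then show ?thesis using that by simp
  qed
  have h1: "(u / s) powr q \<le> u / s" using s u by (intro le) (auto simp: s_def)
  have h2: "(1 / s) powr q \<le> 1 / s" using s u by (intro le) (auto simp: s_def)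
  have "(u / s) powr q + (1 / s) powr q \<le> u / s + 1 / s" using h1 h2 by simp
  also have "\<dots> = 1" using s by (simp add: s_def field_simps)
  finally have "u powr q / s powr q + 1 / s powr q \<le> 1"
    using s u by (simp add: powr_divide)
  then have "u powr q + 1 \<le> s powr q" using s by (simp add: field_simps)
  then show ?thesis by (simp add: s_def)
qed

lemma comb2:
  fixes q u :: real
  assumes q: "q \<ge> 2" and u: "u \<ge> 0"
  shows "1 + q * u + u powr q \<le> (1 + u) powr q"
proof -
  have e: "(1 + u) powr q = (1 + u) powr (q - 1) * (1 + u)"
    using u by (simp add: powr_diff)
  have b1: "1 + (q - 1) * u \<le> (1 + u) powr (q - 1)" using q u by (intro bern_pos) auto
  have b2: "1 + u powr (q - 1) \<le> (1 + u) powr (q - 1)" using q u by (intro superadd) auto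
  have up: "u * u powr (q - 1) = u powr q"
    using u by (cases "u = 0") (auto simp: powr_diff)
  have "1 + q * u + u powr q = (1 + (q - 1) * u) + u * (1 + u powr (q - 1))"
    using up by (simp add: algebra_simps)
  also have "\<dots> \<le> (1 + u) powr (q - 1) + u * (1 + u) powr (q - 1)"
    using b1 b2 u by (intro add_mono mult_left_mono) auto
  also have "\<dots> = (1 + u) powr q" using e by (simp add: algebra_simps)
  finally show ?thesis .
qed

lemma comb_theta:
  fixes q u \<theta> :: real
  assumes q: "q \<ge> 1" and u: "u \<ge> 0" and th: "0 \<le> \<theta>" "\<theta> \<le> 1"
  shows "1 + \<theta> * q * u + (1 - \<theta>) * u powr q \<le> (1 + u) powr q"
proof -
  have b1: "1 + q * u \<le> (1 + u) powr q" using q u by (intro bern_pos) auto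
  have b2: "1 + u powr q \<le> (1 + u) powr q" using q u by (intro superadd) auto
  have "1 + \<theta> * q * u + (1 - \<theta>) * u powr q = \<theta> * (1 + q * u) + (1 - \<theta>) * (1 + u powr q)"
    by (simp add: algebra_simps)
  also have "\<dots> \<le> \<theta> * (1 + u) powr q + (1 - \<theta>) * (1 + u) powr q"
    using b1 b2 th by (intro add_mono mult_left_mono) auto
  also have "\<dots> = (1 + u) powr q" by (simp add: algebra_simps)
  finally show ?thesis .
qed

lemma combAB:
  fixes q \<alpha> \<beta> A B :: real
  assumes q: "q \<ge> 1" and ab: "0 \<le> \<beta>" "\<beta> \<le> 1"
    and H: "\<And>u. u \<ge> 0 \<Longrightarrow> 1 + \<alpha> * u + \<beta> * u powr q \<le> (1 + u) powr q"
    and A: "A \<ge> 0" and B: "B \<ge> 0"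
  shows "A powr q + \<alpha> * (A powr (q - 1) * B) + \<beta> * B powr q \<le> (A + B) powr q"
proof (cases "A = 0")
  case True
  then show ?thesis using ab B by (simp add: mult_left_le_one_le)
next
  case False
  then have A': "A > 0" using A by auto
  define u where "u = B / A"
  have u: "u \<ge> 0" using A' B by (simp add: u_def)
  have "A powr q * (1 + \<alpha> * u + \<beta> * u powr q) \<le> A powr q * (1 + u) powr q"
    using H[OF u] by (intro mult_left_mono) auto
  moreover have "A powr q * (1 + u) powr q = (A + B) powr q"
  proof -
    have "A * (1 + u) = A + B" using A' by (simp add: u_def field_simps)
    then show ?thesis using A' u by (metis powr_mult less_imp_le add_nonneg_nonneg zero_le_one)
  qed
  moreover have "A powr q * u = A powr (q - 1) * B"
    using A' by (simp add: u_def powr_diff field_simps)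
  moreover have "A powr q * u powr q = B powr q"
    using A' B by (simp add: u_def powr_divide)
  ultimately show ?thesis by (simp add: algebra_simps)
qed

lemma g_neg:
  fixes p v :: real
  assumes p: "p \<ge> 2" and v: "-1 \<le> v" "v \<le> 0"
  shows "\<bar>1 + v\<bar> powr p - 1 - p * v \<le> p * (p - 1) / 2 * v\<^sup>2"
proof (cases "v = -1")
  case True
  have "0 \<le> (p - 1) * (p - 2)" using p by (intro mult_nonneg_nonneg) auto
  then show ?thesis using p True by (simp add: power2_eq_square field_simps)
next
  case False
  then have v1: "-1 < v" using v by auto
  let ?h = "\<lambda>x. p * (p - 1) / 2 * x\<^sup>2 - (1 + x) powr p + 1 + p * x"
  have "?h 0 \<le> ?h v"
  proof (rule DERIV_nonpos_imp_nonincreasing[OF v(2)])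
    fix x assume x: "v \<le> x" "x \<le> 0"
    have d: "DERIV ?h x :> p * (p - 1) * x - p * (1 + x) powr (p - 1) + p"
      using x v1 by (auto intro!: derivative_eq_intros simp: power2_eq_square field_simps)
    have "1 + (p - 1) * x \<le> (1 + x) powr (p - 1)" using x v1 p by (intro bern_neg) auto
    then have "p * (1 + (p - 1) * x) \<le> p * (1 + x) powr (p - 1)" using p by (intro mult_left_mono) auto
    then have "p * (p - 1) * x - p * (1 + x) powr (p - 1) + p \<le> 0" by (simp add: algebra_simps)
    then show "\<exists>y. DERIV ?h x :> y \<and> y \<le> 0" using d by blast
  qed
  then show ?thesis using v1 by simp
qed

lemma aux_pm1:
  fixes p x :: real
  assumes p: "p \<ge> 2" and x: "x \<ge> 0"
  shows "(1 + x) powr (p - 1) - 1 \<le> (p - 1) * x * (1 + x) powr (p - 2)"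
proof -
  have b: "1 + (2 - p) * x \<le> (1 + x) powr (2 - p)" using p x by (intro bern_pos) auto
  have pos: "(1 + x) powr (p - 2) > 0" using x by simp
  have "(1 + x) powr (p - 2) * (1 + (2 - p) * x) \<le> (1 + x) powr (p - 2) * (1 + x) powr (2 - p)"
    using b pos by (intro mult_left_mono) auto
  also have "\<dots> = 1" using x by (simp add: powr_add[symmetric])
  finally have *: "(1 + x) powr (p - 2) * (1 + (2 - p) * x) \<le> 1" .
  have e: "(1 + x) powr (p - 1) = (1 + x) powr (p - 2) * (1 + x)"
  proof -
    have "(1 + x) powr (p - 1) = (1 + x) powr ((p - 2) + 1)" by simp
    also have "\<dots> = (1 + x) powr (p - 2) * (1 + x) powr 1" by (rule powr_add)
    finally show ?thesis using x by simp
  qed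
  show ?thesis using * unfolding e by (simp add: algebra_simps)
qed

lemma phi_nonneg:
  fixes p x :: real
  assumes p: "p \<ge> 2" and x: "x \<ge> 0"
  shows "0 \<le> x * (p * (1 + x) powr (p - 1) - p) - 2 * ((1 + x) powr p - 1 - p * x)"
proof -
  let ?f = "\<lambda>x. x * (p * (1 + x) powr (p - 1) - p) - 2 * ((1 + x) powr p - 1 - p * x)"
  have "?f 0 \<le> ?f x"
  proof (rule DERIV_nonneg_imp_nondecreasing[OF x])
    fix y assume y: "0 \<le> y" "y \<le> x"
    have d: "DERIV ?f y :> (p * (1 + y) powr (p - 1) - p) + y * (p * ((p - 1) * (1 + y) powr (p - 2)))
                - 2 * (p * (1 + y) powr (p - 1) - p)"
      using y by (auto intro!: derivative_eq_intros simp: algebra_simps)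
    have "(1 + y) powr (p - 1) - 1 \<le> (p - 1) * y * (1 + y) powr (p - 2)" using aux_pm1 p y by auto
    then have "p * ((1 + y) powr (p - 1) - 1) \<le> p * ((p - 1) * y * (1 + y) powr (p - 2))"
      using p by (intro mult_left_mono) auto
    then have "0 \<le> (p * (1 + y) powr (p - 1) - p) + y * (p * ((p - 1) * (1 + y) powr (p - 2)))
                - 2 * (p * (1 + y) powr (p - 1) - p)" by (simp add: algebra_simps)
    then show "\<exists>d. DERIV ?f y :> d \<and> 0 \<le> d" using d by blast
  qed
  then show ?thesis by simp
qed

lemma g_ratio_mono:
  fixes p v t :: real
  assumes p: "p \<ge> 2" and v: "0 < v" "v \<le> t"
  shows "((1 + v) powr p - 1 - p * v) / v\<^sup>2 \<le> ((1 + t) powr p - 1 - p * t) / t\<^sup>2"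
proof (rule DERIV_nonneg_imp_nondecreasing[OF v(2)])
  fix x assume x: "v \<le> x" "x \<le> t"
  then have x0: "x > 0" using v by auto
  let ?g = "\<lambda>x. (1 + x) powr p - 1 - p * x"
  have dg: "DERIV ?g x :> p * (1 + x) powr (p - 1) - p"
    using x0 by (auto intro!: derivative_eq_intros)
  have dq: "DERIV (\<lambda>x. x\<^sup>2) x :> 2 * x" by (auto intro!: derivative_eq_intros)
  have "DERIV (\<lambda>x. ?g x / x\<^sup>2) x :> ((p * (1 + x) powr (p - 1) - p) * x\<^sup>2 - ?g x * (2 * x)) / (x\<^sup>2 * x\<^sup>2)"
    using DERIV_divide[OF dg dq] x0 by simp
  moreover have "((p * (1 + x) powr (p - 1) - p) * x\<^sup>2 - ?g x * (2 * x)) / (x\<^sup>2 * x\<^sup>2)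
      = (x * (p * (1 + x) powr (p - 1) - p) - 2 * ?g x) / x ^ 3"
    using x0 by (simp add: power2_eq_square power3_eq_cube field_simps)
  moreover have "0 \<le> (x * (p * (1 + x) powr (p - 1) - p) - 2 * ?g x) / x ^ 3"
    using phi_nonneg[OF p, of x] x0 by simp
  ultimately show "\<exists>y. DERIV (\<lambda>x. ?g x / x\<^sup>2) x :> y \<and> 0 \<le> y" by auto
qed

lemma ptw0:
  fixes p C1 C2 t0 v :: real
  assumes p: "p \<ge> 2" and c1: "C1 \<ge> p * (p - 1) / 2" "C1 \<ge> p" and c2: "C2 \<ge> 1"
    and t0: "t0 > 0" and ha: "(1 + 1 / t0) powr p \<le> C2"
    and hd: "(1 + t0) powr p - 1 - p * t0 \<le> C1 * t0\<^sup>2"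
  shows "\<bar>1 + v\<bar> powr p \<le> 1 + p * v + C1 * v\<^sup>2 + C2 * \<bar>v\<bar> powr p"
proof -
  have vp: "0 \<le> \<bar>v\<bar> powr p" by simp
  consider "v < -1" | "-1 \<le> v \<and> v \<le> 0" | "0 < v \<and> v \<le> t0" | "t0 < v" by linarith
  then show ?thesis
  proof cases
    case 1
    have "\<bar>1 + v\<bar> powr p \<le> \<bar>v\<bar> powr p" using 1 p by (intro powr_mono2) auto
    also have "\<dots> \<le> C2 * \<bar>v\<bar> powr p" using c2 vp by (simp add: mult_le_cancel_right1)
    finally have a: "\<bar>1 + v\<bar> powr p \<le> C2 * \<bar>v\<bar> powr p" .
    have "-v * 1 \<le> -v * -v" using 1 by (intro mult_left_mono) auto
    then have "p * (-v) \<le> p * v\<^sup>2" using 1 p by (intro mult_left_mono) (auto simp: power2_eq_square)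
    also have "\<dots> \<le> C1 * v\<^sup>2" using c1 by (intro mult_right_mono) auto
    finally have "0 \<le> 1 + p * v + C1 * v\<^sup>2" by simp
    then show ?thesis using a by linarith
  next
    case 2
    have "\<bar>1 + v\<bar> powr p - 1 - p * v \<le> p * (p - 1) / 2 * v\<^sup>2" using g_neg[OF p] 2 by auto
    also have "\<dots> \<le> C1 * v\<^sup>2" using c1 by (intro mult_right_mono) auto
    finally show ?thesis using vp c2 by (smt (verit) mult_nonneg_nonneg)
  next
    case 3
    have "((1 + v) powr p - 1 - p * v) / v\<^sup>2 \<le> ((1 + t0) powr p - 1 - p * t0) / t0\<^sup>2"
      using g_ratio_mono[OF p] 3 by auto
    also have "\<dots> \<le> C1" using hd t0 by (simp add: divide_le_eq)
    finally have "(1 + v) powr p - 1 - p * v \<le> C1 * v\<^sup>2" using 3 by (simp add: divide_le_eq)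
    moreover have "\<bar>1 + v\<bar> = 1 + v" using 3 by auto
    ultimately show ?thesis using vp c2 by (smt (verit) mult_nonneg_nonneg)
  next
    case 4
    have "1 + v \<le> (1 + 1 / t0) * v" using 4 t0 by (simp add: field_simps)
    then have "(1 + v) powr p \<le> ((1 + 1 / t0) * v) powr p" using 4 t0 p by (intro powr_mono2) auto
    also have "\<dots> = (1 + 1 / t0) powr p * v powr p" using 4 t0 by (simp add: powr_mult)
    also have "\<dots> \<le> C2 * v powr p" using ha by (intro mult_right_mono) auto
    finally have a: "\<bar>1 + v\<bar> powr p \<le> C2 * \<bar>v\<bar> powr p" using 4 t0 by simp
    have "0 \<le> 1 + p * v + C1 * v\<^sup>2" using 4 t0 p c1 by (simp add: add_nonneg_nonneg)
    then show ?thesis using a by linarith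
  qed
qed

lemma ptw:
  fixes p C1 C2 a w :: real
  assumes p: "p \<ge> 2" and c2: "C2 \<ge> 1"
    and H: "\<And>v. \<bar>1 + v\<bar> powr p \<le> 1 + p * v + C1 * v\<^sup>2 + C2 * \<bar>v\<bar> powr p"
  shows "\<bar>a + w\<bar> powr p \<le> \<bar>a\<bar> powr p + (p * sgn a * \<bar>a\<bar> powr (p - 1)) * w
            + C1 * \<bar>a\<bar> powr (p - 2) * w\<^sup>2 + C2 * \<bar>w\<bar> powr p"
proof (cases "a = 0")
  case True
  then show ?thesis using c2 by (simp add: mult_le_cancel_right1)
next
  case False
  define v where "v = w / a"
  have A: "\<bar>a\<bar> > 0" using False by auto
  have w: "w = a * v" using False by (simp add: v_def)
  have "\<bar>a + w\<bar> powr p = (\<bar>a\<bar> * \<bar>1 + v\<bar>) powr p" by (simp add: w abs_mult[symmetric] algebra_simps)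
  also have "\<dots> = \<bar>a\<bar> powr p * \<bar>1 + v\<bar> powr p" by (simp add: powr_mult)
  also have "\<dots> \<le> \<bar>a\<bar> powr p * (1 + p * v + C1 * v\<^sup>2 + C2 * \<bar>v\<bar> powr p)"
    using H[of v] by (intro mult_left_mono) auto
  also have "\<dots> = \<bar>a\<bar> powr p + (p * sgn a * \<bar>a\<bar> powr (p - 1)) * w
            + C1 * \<bar>a\<bar> powr (p - 2) * w\<^sup>2 + C2 * \<bar>w\<bar> powr p"
  proof -
    have e1: "\<bar>a\<bar> powr p = \<bar>a\<bar> powr (p - 1) * \<bar>a\<bar>" using A by (simp add: powr_diff)
    have e2: "\<bar>a\<bar> powr p = \<bar>a\<bar> powr (p - 2) * \<bar>a\<bar>\<^sup>2" using A by (simp add: powr_diff)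
    have s: "\<bar>a\<bar> = sgn a * a" by (simp add: abs_sgn)
    have x1: "\<bar>a\<bar> powr p * v = sgn a * \<bar>a\<bar> powr (p - 1) * w"
      unfolding e1 w by (subst (2) s) (simp add: algebra_simps)
    have x2: "\<bar>a\<bar> powr p * v\<^sup>2 = \<bar>a\<bar> powr (p - 2) * w\<^sup>2"
      unfolding e2 w by (simp add: algebra_simps power2_eq_square)
    have x3: "\<bar>a\<bar> powr p * \<bar>v\<bar> powr p = \<bar>w\<bar> powr p"
      unfolding w by (simp add: abs_mult powr_mult)
    have "\<bar>a\<bar> powr p * (1 + p * v + C1 * v\<^sup>2 + C2 * \<bar>v\<bar> powr p)
       = \<bar>a\<bar> powr p + p * (\<bar>a\<bar> powr p * v) + C1 * (\<bar>a\<bar> powr p * v\<^sup>2) + C2 * (\<bar>a\<bar> powr p * \<bar>v\<bar> powr p)"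
      by (simp add: algebra_simps)
    also have "\<dots> = \<bar>a\<bar> powr p + (p * sgn a * \<bar>a\<bar> powr (p - 1)) * w
            + C1 * \<bar>a\<bar> powr (p - 2) * w\<^sup>2 + C2 * \<bar>w\<bar> powr p"
      unfolding x1 x2 x3 by (simp add: algebra_simps)
    finally show ?thesis .
  qed
  finally show ?thesis .
qed

lemma e_ge: "exp 1 \<ge> (27/10::real)"
proof -
  have "exp (1::real) = exp (real 8 * (1/8))" by simp
  also have "\<dots> = exp (1/8) ^ 8" by (rule exp_of_nat_mult)
  finally have e: "exp (1::real) = exp (1/8) ^ 8" .
  have "1 + 1/8 + (1/8)\<^sup>2 / 2 \<le> exp (1/8::real)" by (rule exp_lower_Taylor_quadratic) simp
  then have "(1 + 1/8 + (1/8)\<^sup>2 / 2) ^ 8 \<le> exp (1/8::real) ^ 8" by (intro power_mono) auto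
  moreover have "(27/10::real) \<le> (1 + 1/8 + (1/8)\<^sup>2 / 2) ^ 8"
  proof -
    have e: "(1 + 1/8 + (1/8)\<^sup>2 / 2 :: real) = 145/128" by (simp add: power2_eq_square)
    show ?thesis unfolding e by (simp add: power_divide)
  qed
  ultimately show ?thesis using e by linarith
qed

lemma ln_le_div_e: "(x::real) > 0 \<Longrightarrow> ln x \<le> x / exp 1"
proof -
  assume x: "x > 0"
  have "ln (x / exp 1) \<le> x / exp 1 - 1" by (rule ln_le_minus_one) (use x in simp)
  then show ?thesis using x by (simp add: ln_div)
qed

lemma combK:
  fixes p K C1 C2 A B :: real
  assumes p: "p \<ge> 2" and K: "K > 0" and b: "0 \<le> C2 / K powr p" "C2 / K powr p \<le> 1"
    and H: "\<And>u. u \<ge> 0 \<Longrightarrow> 1 + (C1 / K\<^sup>2) * u + (C2 / K powr p) * u powr (p/2) \<le> (1 + u) powr (p/2)"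
    and A: "A \<ge> 0" and B: "B \<ge> 0"
  shows "A powr (p/2) + C1 * (A powr (p/2 - 1) * B) + C2 * B powr (p/2) \<le> (A + K\<^sup>2 * B) powr (p/2)"
proof -
  have "A powr (p/2) + (C1 / K\<^sup>2) * (A powr (p/2 - 1) * (K\<^sup>2 * B)) + (C2 / K powr p) * (K\<^sup>2 * B) powr (p/2)
        \<le> (A + K\<^sup>2 * B) powr (p/2)"
    using p b A B K by (intro combAB H) auto
  moreover have "(K\<^sup>2 * B) powr (p/2) = K powr p * B powr (p/2)"
  proof -
    have "(K\<^sup>2) powr (p/2) = K powr p"
    proof -
      have "K powr 2 = K\<^sup>2" using K by (rule powr_numeral[OF less_imp_le])
      then have "K\<^sup>2 powr (p/2) = (K powr 2) powr (p/2)" by simp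
      also have "\<dots> = K powr p" by (simp add: powr_powr)
      finally show ?thesis .
    qed
    then show ?thesis using K B by (simp add: powr_mult)
  qed
  moreover have "(C1 / K\<^sup>2) * (A powr (p/2 - 1) * (K\<^sup>2 * B)) = C1 * (A powr (p/2 - 1) * B)"
    using K by (simp add: field_simps)
  moreover have "(C2 / K powr p) * (K powr p * B powr (p/2)) = C2 * B powr (p/2)"
    using K by simp
  ultimately show ?thesis by simp
qed

lemma two_powr_52: "2 powr (5/2::real) = 4 * sqrt 2"
proof -
  have "2 powr (5/2::real) = 2 powr (2 + 1/2)" by simp
  also have "\<dots> = 2 powr 2 * 2 powr (1/2)" by (rule powr_add)
  finally show ?thesis by (simp add: powr_half_sqrt)
qed

lemma two_powr_72: "2 powr (7/2::real) = 8 * sqrt 2"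
proof -
  have "2 powr (7/2::real) = 2 powr (3 + 1/2)" by simp
  also have "\<dots> = 2 powr 3 * 2 powr (1/2)" by (rule powr_add)
  finally show ?thesis by (simp add: powr_half_sqrt)
qed

definition Kc :: "real \<Rightarrow> real" where "Kc p = sqrt 2 * p / max 1 (ln p)"

lemma constants:
  fixes p :: real
  assumes p: "p \<ge> 2"
  shows "\<exists>C1 C2. C1 \<ge> 0 \<and> C2 \<ge> 1 \<and>
     (\<forall>v. \<bar>1 + v\<bar> powr p \<le> 1 + p * v + C1 * v\<^sup>2 + C2 * \<bar>v\<bar> powr p) \<and>
     (\<forall>A B. A \<ge> 0 \<longrightarrow> B \<ge> 0 \<longrightarrow>
        A powr (p/2) + C1 * (A powr (p/2 - 1) * B) + C2 * B powr (p/2) \<le> (A + (Kc p)\<^sup>2 * B) powr (p/2))"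
proof -
  have e27: "exp 1 \<ge> (27/10::real)" by (rule e_ge)
  have e3: "exp 1 \<le> (3::real)" by (rule exp_le)
  have lnp: "ln p > 0" using p by simp
  have lnle: "ln p \<le> p / exp 1" using p by (intro ln_le_div_e) auto
  have s2: "sqrt 2 \<ge> (14/10::real)"
    by (rule real_le_rsqrt) (simp add: power2_eq_square)
  show ?thesis
  proof (cases "p \<ge> 4")
    case True
    have lnp1: "ln p \<ge> 1"
    proof -
      have "exp 1 \<le> p" using e3 True by linarith
      then have "ln (exp 1) \<le> ln p" using p by (subst ln_le_cancel_iff) auto
      then show ?thesis by simp
    qed
    then have Kd: "Kc p = sqrt 2 * p / ln p" by (simp add: Kc_def)
    define K where "K = Kc p"
    define C1 where "C1 = p ^ 3 / (ln p)\<^sup>2"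
    define C2 where "C2 = K powr p"
    define t0 where "t0 = ln p / p"
    have t0: "t0 > 0" using lnp p by (simp add: t0_def)
    have pe: "p / ln p \<ge> exp 1" using lnle lnp by (simp add: field_simps)
    have Kpos: "K \<ge> 1"
    proof -
      have "sqrt 2 * (p / ln p) \<ge> 1 * 1" using pe e27 s2 by (intro mult_mono) auto
      then show ?thesis by (simp add: K_def Kd)
    qed
    have ln2: "(ln p)\<^sup>2 \<le> 2 * p"
    proof -
      have "ln (sqrt p) \<le> sqrt p / exp 1" using p by (intro ln_le_div_e) auto
      then have "ln p \<le> 2 * sqrt p / exp 1" using p by (simp add: ln_sqrt field_simps)
      moreover have "2 * sqrt p / exp 1 \<le> 2 * sqrt p / 2" using e27 p by (intro divide_left_mono) auto
      ultimately have "ln p \<le> sqrt p" by simp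
      then have "(ln p)\<^sup>2 \<le> (sqrt p)\<^sup>2" using lnp by (intro power_mono) auto
      then show ?thesis using p by simp
    qed
    have c1a: "C1 \<ge> p * p / 2"
    proof -
      have "p ^ 3 / (2 * p) \<le> p ^ 3 / (ln p)\<^sup>2" using ln2 lnp p by (intro divide_left_mono) auto
      moreover have "p ^ 3 / (2 * p) = p * p / 2" using p by (simp add: power3_eq_cube)
      ultimately show ?thesis by (simp add: C1_def)
    qed
    have c1: "C1 \<ge> p * (p - 1) / 2" "C1 \<ge> p" "C1 \<ge> 0"
    proof -
      have "p * (p - 1) / 2 \<le> p * p / 2" using p by (simp add: field_simps)
      then show "C1 \<ge> p * (p - 1) / 2" using c1a by linarith
      have "p \<le> p * p / 2" using p by (simp add: field_simps)
      then show "C1 \<ge> p" using c1a by linarith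
      then show "C1 \<ge> 0" using p by linarith
    qed
    have c2: "C2 \<ge> 1" using Kpos p by (simp add: C2_def ge_one_powr_ge_zero)
    have ha: "(1 + 1 / t0) powr p \<le> C2"
    proof -
      have "ln p \<le> (4/10) * p"
      proof -
        have "p / exp 1 \<le> p / (27/10)" using e27 p by (intro divide_left_mono) auto
        also have "p / (27/10) \<le> (4/10) * p" using p by simp
        finally have "p / exp 1 \<le> (4/10) * p" .
        then show ?thesis using lnle by linarith
      qed
      moreover have "(4/10) * p \<le> (sqrt 2 - 1) * p" by (rule mult_right_mono) (use s2 p in auto)
      ultimately have "ln p \<le> (sqrt 2 - 1) * p" by linarith
      then have "(ln p + p) / ln p \<le> (sqrt 2 * p) / ln p" using lnp
        by (intro divide_right_mono) (auto simp: algebra_simps)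
      moreover have "(ln p + p) / ln p = 1 + p / ln p" using lnp by (simp add: add_divide_distrib)
      ultimately have "1 + p / ln p \<le> sqrt 2 * p / ln p" by simp
      then have "1 + 1 / t0 \<le> K" using lnp p by (simp add: t0_def K_def Kd)
      then show ?thesis unfolding C2_def using t0 p by (intro powr_mono2) (auto simp: add_pos_pos)
    qed
    have hd: "(1 + t0) powr p - 1 - p * t0 \<le> C1 * t0\<^sup>2"
    proof -
      have "(1 + t0) powr p \<le> (exp t0) powr p" using t0 p by (intro powr_mono2) auto
      also have "\<dots> = exp (p * t0)" by (simp add: powr_def)
      also have "\<dots> = p" using p lnp by (simp add: t0_def)
      finally have "(1 + t0) powr p \<le> p" .
      moreover have "C1 * t0\<^sup>2 = p" using lnp p by (simp add: C1_def t0_def power2_eq_square power3_eq_cube field_simps)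
      moreover have "0 \<le> p * t0" using t0 p by simp
      ultimately show ?thesis by linarith
    qed
    have pw: "\<forall>v. \<bar>1 + v\<bar> powr p \<le> 1 + p * v + C1 * v\<^sup>2 + C2 * \<bar>v\<bar> powr p"
      using ptw0[OF p c1(1) c1(2) c2 t0 ha hd] by blast
    have K0: "K > 0" using Kpos by simp
    have ab: "\<forall>A B. A \<ge> 0 \<longrightarrow> B \<ge> 0 \<longrightarrow>
        A powr (p/2) + C1 * (A powr (p/2 - 1) * B) + C2 * B powr (p/2) \<le> (A + K\<^sup>2 * B) powr (p/2)"
    proof (intro allI impI)
      fix A B :: real assume A: "A \<ge> 0" and B: "B \<ge> 0"
      have Kp: "K powr p > 0" using K0 by simp
      have a: "C1 / K\<^sup>2 = p / 2" using lnp p by (simp add: C1_def K_def Kd power2_eq_square power3_eq_cube field_simps)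
      have b: "C2 / K powr p = 1" using Kp by (simp add: C2_def)
      show "A powr (p/2) + C1 * (A powr (p/2 - 1) * B) + C2 * B powr (p/2) \<le> (A + K\<^sup>2 * B) powr (p/2)"
      proof (rule combK[OF p K0 _ _ _ A B])
        fix u :: real assume u: "u \<ge> 0"
        have "1 + (p/2) * u + u powr (p/2) \<le> (1 + u) powr (p/2)" using comb2[of "p/2" u] True u by simp
        then show "1 + C1 / K\<^sup>2 * u + C2 / K powr p * u powr (p / 2) \<le> (1 + u) powr (p / 2)"
          unfolding a b by simp
      qed (simp_all add: b)
    qed
    show ?thesis using c1 c2 pw ab unfolding K_def by blast
  next
    case False
    define L where "L = max 1 (ln p)"
    define K where "K = Kc p"
    have Kd: "K = sqrt 2 * p / L" by (simp add: K_def Kc_def L_def)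
    have L1: "L \<ge> 1" by (simp add: L_def)
    define C1 where "C1 = p ^ 3 / (2 * L\<^sup>2)"
    define C2 where "C2 = K powr p / 2"
    have L2: "L\<^sup>2 \<le> p\<^sup>2 / (exp 1)\<^sup>2 \<or> L = 1"
    proof (cases "ln p \<le> 1")
      case True then show ?thesis by (simp add: L_def)
    next
      case False
      then have "L = ln p" by (simp add: L_def)
      then have "L\<^sup>2 \<le> (p / exp 1)\<^sup>2" using lnle False by (intro power_mono) auto
      then show ?thesis by (simp add: power_divide)
    qed
    have ee: "(exp 1)\<^sup>2 \<ge> (729/100::real)"
    proof -
      have "(27/10::real)\<^sup>2 \<le> (exp 1)\<^sup>2" using e27 by (intro power_mono) auto
      then show ?thesis by (simp add: power2_eq_square)
    qed
    have s2u: "sqrt 2 \<le> (1415/1000::real)"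
    proof -
      have "sqrt 2 \<le> sqrt ((1415/1000::real)\<^sup>2)" by (subst real_sqrt_le_iff) (simp add: power2_eq_square)
      then show ?thesis by simp
    qed
    have Lpos: "L > 0" using L1 by simp
    have c1: "C1 \<ge> p * (p - 1) / 2" "C1 \<ge> p" "C1 \<ge> 0"
    proof -
      have A: "(p - 1) * L\<^sup>2 \<le> p\<^sup>2 \<and> 2 * L\<^sup>2 \<le> p\<^sup>2"
      proof (cases "L = 1")
        case True
        have "2 * 2 \<le> p * p" using p by (intro mult_mono) auto
        then show ?thesis using p True \<open>\<not> 4 \<le> p\<close> by (simp add: power2_eq_square)
      next
        case False
        then have L2a: "L\<^sup>2 \<le> p\<^sup>2 / (exp 1)\<^sup>2" using L2 by auto
        have "p\<^sup>2 / (exp 1)\<^sup>2 \<le> p\<^sup>2 / (729/100)" using ee by (intro divide_left_mono) auto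
        from order_trans[OF L2a this] have L3: "L\<^sup>2 \<le> p\<^sup>2 * (100/729)" by simp
        have "(p - 1) * L\<^sup>2 \<le> 3 * (p\<^sup>2 * (100/729))" using \<open>\<not> 4 \<le> p\<close> p L3
          by (intro mult_mono) auto
        moreover have "2 * L\<^sup>2 \<le> 2 * (p\<^sup>2 * (100/729))" using L3 by simp
        moreover have "0 \<le> p\<^sup>2" by simp
        ultimately show ?thesis by linarith
      qed
      have "p * (p - 1) / 2 = p * ((p - 1) * L\<^sup>2) / (2 * L\<^sup>2)" using Lpos by (simp add: field_simps)
      also have "\<dots> \<le> p * p\<^sup>2 / (2 * L\<^sup>2)" using A p Lpos by (intro divide_right_mono mult_left_mono) auto
      also have "\<dots> = C1" by (simp add: C1_def power2_eq_square power3_eq_cube)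
      finally show "C1 \<ge> p * (p - 1) / 2" .
      have "p = p * (2 * L\<^sup>2) / (2 * L\<^sup>2)" using Lpos by simp
      also have "\<dots> \<le> p * p\<^sup>2 / (2 * L\<^sup>2)" using A p Lpos by (intro divide_right_mono mult_left_mono) auto
      also have "\<dots> = C1" by (simp add: C1_def power2_eq_square power3_eq_cube)
      finally show "C1 \<ge> p" .
      then show "C1 \<ge> 0" using p by linarith
    qed
    have K2: "K / 2 \<ge> sqrt 2"
    proof (cases "L = 1")
      case True then show ?thesis using p by (simp add: Kd)
    next
      case False
      then have "L = ln p" by (simp add: L_def max_def split: if_splits)
      then have "p / L \<ge> exp 1" using lnle lnp by (simp add: field_simps)
      then have "p / L \<ge> 2" using e27 by linarith
      then have "sqrt 2 * (p / L) \<ge> sqrt 2 * 2" by (intro mult_left_mono) auto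
      then show ?thesis by (simp add: Kd)
    qed
    have K0: "K > 0"
    proof -
      have "sqrt 2 > (0::real)" by simp
      then show ?thesis using K2 by linarith
    qed
    have Kp: "K powr p \<ge> 2 * 2 powr p"
    proof -
      have "sqrt 2 powr p \<ge> sqrt 2 powr 2" using p by (intro powr_mono) auto
      then have "sqrt 2 powr p \<ge> 2" by simp
      moreover have "(K / 2) powr p \<ge> sqrt 2 powr p" using K2 p by (intro powr_mono2) auto
      moreover have "K powr p = 2 powr p * (K / 2) powr p" using K0 by (simp add: powr_divide)
      ultimately have "(K / 2) powr p \<ge> 2" by linarith
      then have "2 powr p * 2 \<le> 2 powr p * (K / 2) powr p" by (intro mult_left_mono) auto
      then show ?thesis using \<open>K powr p = 2 powr p * (K / 2) powr p\<close> by simp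
    qed
    have c2: "C2 \<ge> 1" "(1 + 1 / 1) powr p \<le> C2"
    proof -
      show "(1 + 1 / 1) powr p \<le> C2" using Kp by (simp add: C2_def)
      moreover have "2 powr p \<ge> 1" using p by (intro ge_one_powr_ge_zero) auto
      ultimately show "C2 \<ge> 1" by simp
    qed
    have hd: "(1 + 1) powr p - 1 - p * 1 \<le> C1 * 1\<^sup>2"
    proof (cases "L = 1")
      case True
      then have "ln p \<le> 1" by (simp add: L_def max_def split: if_splits)
      then have "p \<le> exp 1" using p by (metis exp_ln exp_le_cancel_iff less_le_trans zero_less_numeral)
      then have p3: "p \<le> 3" using e3 by linarith
      have C1e: "C1 = p ^ 3 / 2" using True by (simp add: C1_def)
      show ?thesis
      proof (cases "p \<le> 5/2")
        case True
        have "2 powr p \<le> 2 powr (5/2)" using True by (intro powr_mono) auto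
        also have "2 powr (5/2::real) = 4 * sqrt 2" by (rule two_powr_52)
        finally have "2 powr p \<le> 6" using s2u by simp
        moreover have "p ^ 3 \<ge> 2 ^ 3" using p by (intro power_mono) auto
        moreover have "(2::real) ^ 3 = 8" by simp
        ultimately have "2 powr p - 1 - p \<le> p ^ 3 / 2" using p by linarith
        then show ?thesis unfolding C1e by simp
      next
        case False
        have "2 powr p \<le> 2 powr 3" using p3 by (intro powr_mono) auto
        moreover have "p ^ 3 \<ge> (5/2) ^ 3" using False by (intro power_mono) auto
        moreover have "(5/2::real) ^ 3 = 125/8" by (simp add: power_divide)
        moreover have "(2::real) powr 3 = 8" by simp
        ultimately have "2 powr p - 1 - p \<le> p ^ 3 / 2" using False by linarith
        then show ?thesis unfolding C1e by simp
      qed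
    next
      case False
      then have Lln: "L = ln p" by (simp add: L_def max_def split: if_splits)
      have pe: "p \<ge> 27/10"
      proof -
        have "1 < ln p" using False Lln L1 by simp
        then have "exp 1 < p" using p by (metis exp_less_cancel_iff exp_ln less_le_trans zero_less_numeral)
        then show ?thesis using e27 by linarith
      qed
      have L2a: "L\<^sup>2 \<le> p\<^sup>2 / (exp 1)\<^sup>2" using L2 False by auto
      have "p\<^sup>2 / (exp 1)\<^sup>2 \<le> p\<^sup>2 / (729/100)" using ee by (intro divide_left_mono) auto
      from order_trans[OF L2a this] have L3: "L\<^sup>2 \<le> p\<^sup>2 * (100/729)" by simp
      have "p ^ 3 / (2 * (p\<^sup>2 * (100/729))) \<le> C1"
        unfolding C1_def using L3 Lpos p by (intro divide_left_mono mult_left_mono) auto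
      moreover have "p ^ 3 / (2 * (p\<^sup>2 * (100/729))) = p * (729/200)"
        using p by (simp add: power2_eq_square power3_eq_cube field_simps)
      ultimately have C1b: "C1 \<ge> p * (729/200)" by simp
      have "2 powr p \<le> 1 + p + p * (729/200)"
      proof (cases "p \<le> 7/2")
        case True
        have "2 powr p \<le> 2 powr (7/2)" using True by (intro powr_mono) auto
        also have "2 powr (7/2::real) = 8 * sqrt 2" by (rule two_powr_72)
        finally have "2 powr p \<le> 8 * (1415/1000)" using s2u by simp
        then show ?thesis using pe by simp
      next
        case nf: False
        have "2 powr p \<le> 2 powr 4" using False \<open>\<not> 4 \<le> p\<close> by (intro powr_mono) auto
        then show ?thesis using nf by simp
      qed
      then show ?thesis using C1b by simp
    qed
    have pw: "\<forall>v. \<bar>1 + v\<bar> powr p \<le> 1 + p * v + C1 * v\<^sup>2 + C2 * \<bar>v\<bar> powr p"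
      using ptw0[OF p c1(1) c1(2) c2(1) _ c2(2)] hd by auto
    have ab: "\<forall>A B. A \<ge> 0 \<longrightarrow> B \<ge> 0 \<longrightarrow>
        A powr (p/2) + C1 * (A powr (p/2 - 1) * B) + C2 * B powr (p/2) \<le> (A + K\<^sup>2 * B) powr (p/2)"
    proof (intro allI impI)
      fix A B :: real assume A: "A \<ge> 0" and B: "B \<ge> 0"
      have Kp0: "K powr p > 0" using K0 by simp
      have a: "C1 / K\<^sup>2 = (1/2) * (p / 2)" using Lpos p by (simp add: C1_def Kd power2_eq_square power3_eq_cube field_simps)
      have b: "C2 / K powr p = 1 - 1/2" using Kp0 by (simp add: C2_def)
      show "A powr (p/2) + C1 * (A powr (p/2 - 1) * B) + C2 * B powr (p/2) \<le> (A + K\<^sup>2 * B) powr (p/2)"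
        using p K0 A B by (intro combK) (auto simp only: a b intro!: comb_theta)
    qed
    show ?thesis using c1 c2 pw ab unfolding K_def by blast
  qed
qed



lemma young0:
  fixes a b \<alpha> \<beta> :: real
  assumes "0 \<le> \<alpha>" "0 \<le> \<beta>" "\<alpha> + \<beta> = 1" "a \<ge> 0" "b \<ge> 0"
  shows "a powr \<alpha> * b powr \<beta> \<le> \<alpha> * a + \<beta> * b"
proof (cases "a = 0 \<or> b = 0")
  case True
  then show ?thesis using assms by auto
next
  case False
  then show ?thesis using assms by (intro Youngs_inequality_0) auto
qed

lemma (in prob_space) holder:
  fixes f g :: "'a \<Rightarrow> real" and \<alpha> \<beta> :: real
  assumes f: "integrable M f" "\<And>x. f x \<ge> 0" and g: "integrable M g" "\<And>x. g x \<ge> 0"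
    and ab: "0 \<le> \<alpha>" "0 \<le> \<beta>" "\<alpha> + \<beta> = 1"
  shows "integrable M (\<lambda>x. f x powr \<alpha> * g x powr \<beta>)"
    and "(\<integral>x. f x powr \<alpha> * g x powr \<beta> \<partial>M) \<le> (\<integral>x. f x \<partial>M) powr \<alpha> * (\<integral>x. g x \<partial>M) powr \<beta>"
proof -
  have fm[measurable]: "f \<in> borel_measurable M" and gm[measurable]: "g \<in> borel_measurable M"
    using f g by auto
  have bnd: "f x powr \<alpha> * g x powr \<beta> \<le> \<alpha> * f x + \<beta> * g x" for x
    using young0[OF ab, of "f x" "g x"] f g by auto
  show int: "integrable M (\<lambda>x. f x powr \<alpha> * g x powr \<beta>)"
  proof (rule Bochner_Integration.integrable_bound[where f="\<lambda>x. \<alpha> * f x + \<beta> * g x"])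
    show "integrable M (\<lambda>x. \<alpha> * f x + \<beta> * g x)" using f g by auto
    show "(\<lambda>x. f x powr \<alpha> * g x powr \<beta>) \<in> borel_measurable M" by measurable
    show "AE x in M. norm (f x powr \<alpha> * g x powr \<beta>) \<le> norm (\<alpha> * f x + \<beta> * g x)"
      using bnd f g ab by (auto intro!: always_eventually)
  qed
  define a where "a = (\<integral>x. f x \<partial>M)"
  define b where "b = (\<integral>x. g x \<partial>M)"
  have a0: "a \<ge> 0" "b \<ge> 0" using f g by (auto simp: a_def b_def)
  show "(\<integral>x. f x powr \<alpha> * g x powr \<beta> \<partial>M) \<le> (\<integral>x. f x \<partial>M) powr \<alpha> * (\<integral>x. g x \<partial>M) powr \<beta>"
  proof (cases "a = 0 \<or> b = 0")
    case True
    then have "AE x in M. f x = 0 \<or> g x = 0"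
    proof
      assume "a = 0"
      then have "AE x in M. f x = 0" using f by (subst integral_nonneg_eq_0_iff_AE[symmetric]) (auto simp: a_def)
      then show ?thesis by auto
    next
      assume "b = 0"
      then have "AE x in M. g x = 0" using g by (subst integral_nonneg_eq_0_iff_AE[symmetric]) (auto simp: b_def)
      then show ?thesis by auto
    qed
    then have "AE x in M. f x powr \<alpha> * g x powr \<beta> = 0" by auto
    then have "(\<integral>x. f x powr \<alpha> * g x powr \<beta> \<partial>M) = (\<integral>x. 0 \<partial>M)" by (intro integral_cong_AE) auto
    then show ?thesis using a0 by (simp add: a_def[symmetric] b_def[symmetric])
  next
    case False
    then have ap: "a > 0" "b > 0" using a0 by auto
    have pt: "f x powr \<alpha> * g x powr \<beta> \<le> a powr \<alpha> * b powr \<beta> * (\<alpha> * (f x / a) + \<beta> * (g x / b))" for x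
    proof -
      have "(f x / a) powr \<alpha> * (g x / b) powr \<beta> \<le> \<alpha> * (f x / a) + \<beta> * (g x / b)"
        using young0[OF ab, of "f x / a" "g x / b"] f g ap by auto
      moreover have "(f x / a) powr \<alpha> * (g x / b) powr \<beta> = f x powr \<alpha> * g x powr \<beta> / (a powr \<alpha> * b powr \<beta>)"
        using f g ap by (simp add: powr_divide)
      moreover have "a powr \<alpha> * b powr \<beta> > 0" using ap by simp
      ultimately show ?thesis by (simp add: field_simps)
    qed
    have "(\<integral>x. f x powr \<alpha> * g x powr \<beta> \<partial>M) \<le> (\<integral>x. a powr \<alpha> * b powr \<beta> * (\<alpha> * (f x / a) + \<beta> * (g x / b)) \<partial>M)"
      using pt int f g by (intro integral_mono) auto
    also have "\<dots> = a powr \<alpha> * b powr \<beta> * (\<alpha> * (a / a) + \<beta> * (b / b))"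
      using f g by (simp add: a_def b_def)
    also have "\<dots> = a powr \<alpha> * b powr \<beta>" using ap ab by simp
    finally show ?thesis by (simp add: a_def b_def)
  qed
qed

lemma sq_le_powr:
  fixes x p :: real
  assumes p: "p \<ge> 2"
  shows "x\<^sup>2 \<le> 1 + \<bar>x\<bar> powr p"
proof (cases "\<bar>x\<bar> \<le> 1")
  case True
  then have "x\<^sup>2 \<le> 1" by (simp add: abs_square_le_1)
  then show ?thesis by (smt (verit) powr_ge_zero)
next
  case False
  have "x\<^sup>2 = \<bar>x\<bar> powr 2" using False by (simp add: powr_numeral[symmetric])
  also have "\<dots> \<le> \<bar>x\<bar> powr p" using False p by (intro powr_mono) auto
  finally show ?thesis by simp
qed

lemma powr_pow_inv:
  fixes a p :: real
  assumes "a \<ge> 0" "p > 0"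
  shows "(a powr (2/p)) powr (p/2) = a"
  using assms by (simp add: powr_powr)

lemma (in prob_space) step:
  fixes U :: "'a \<Rightarrow> 'b" and W :: "'a \<Rightarrow> 'b" and N1 N :: "'b measure" and F G e :: "'b \<Rightarrow> real"
  assumes p: "p \<ge> 2" and C: "C1 \<ge> 0" "C2 \<ge> 1"
    and pw: "\<And>v. \<bar>1 + v\<bar> powr p \<le> 1 + p * v + C1 * v\<^sup>2 + C2 * \<bar>v\<bar> powr p"
    and ab: "\<forall>A B. A \<ge> 0 \<longrightarrow> B \<ge> 0 \<longrightarrow>
        A powr (p/2) + C1 * (A powr (p/2 - 1) * B) + C2 * B powr (p/2) \<le> (A + K\<^sup>2 * B) powr (p/2)"
    and ind: "indep_var N1 U N W"
    and em[measurable]: "e \<in> borel_measurable N1"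
    and Fm[measurable]: "F \<in> borel_measurable N" and Gm[measurable]: "G \<in> borel_measurable N"
    and xi1: "integrable M (\<lambda>x. e (U x))" and xi0: "(\<integral>x. e (U x) \<partial>M) = 0"
    and xip: "integrable M (\<lambda>x. \<bar>e (U x)\<bar> powr p)"
    and Fi: "integrable M (\<lambda>x. \<bar>F (W x)\<bar> powr p)" and Gi: "integrable M (\<lambda>x. \<bar>G (W x)\<bar> powr p)"
  shows "integrable M (\<lambda>x. \<bar>F (W x) + e (U x) * G (W x)\<bar> powr p)"
    and "(\<integral>x. \<bar>F (W x) + e (U x) * G (W x)\<bar> powr p \<partial>M) powr (2/p)
         \<le> (\<integral>x. \<bar>F (W x)\<bar> powr p \<partial>M) powr (2/p)
            + K\<^sup>2 * ((\<integral>x. \<bar>e (U x)\<bar> powr p \<partial>M) powr (2/p) * (\<integral>x. \<bar>G (W x)\<bar> powr p \<partial>M) powr (2/p))"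
proof -
  have Um[measurable]: "U \<in> measurable M N1" using indep_var_rv1[OF ind] by simp
  have Wm[measurable]: "W \<in> measurable M N" using indep_var_rv2[OF ind] by simp
  define PX where "PX = distr M N1 U"
  define PW where "PW = distr M N W"
  interpret PX: prob_space PX unfolding PX_def by (rule prob_space_distr) simp
  interpret PW: prob_space PW unfolding PW_def by (rule prob_space_distr) simp
  interpret PXW: pair_prob_space PX PW ..
  have D: "PX \<Otimes>\<^sub>M PW = distr M (N1 \<Otimes>\<^sub>M N) (\<lambda>x. (U x, W x))"
    using ind unfolding PX_def PW_def by (simp add: indep_var_distribution_eq)
  have sPX[simp]: "sets PX = sets N1" "space PX = space N1" by (simp_all add: PX_def)
  have sPW[simp]: "sets PW = sets N" "space PW = space N" by (simp_all add: PW_def)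
  have [measurable]: "e \<in> borel_measurable PX" using em by (simp add: PX_def)
  define m where "m = (\<integral>x. \<bar>e (U x)\<bar> powr p \<partial>M)"
  define m2 where "m2 = (\<integral>x. (e (U x))\<^sup>2 \<partial>M)"
  define a where "a = (\<integral>x. \<bar>F (W x)\<bar> powr p \<partial>M)"
  define z where "z = (\<integral>x. \<bar>G (W x)\<bar> powr p \<partial>M)"
  have xi2: "integrable M (\<lambda>x. (e (U x))\<^sup>2)"
  proof (rule Bochner_Integration.integrable_bound[where f="\<lambda>x. 1 + \<bar>e (U x)\<bar> powr p"])
    show "integrable M (\<lambda>x. 1 + \<bar>e (U x)\<bar> powr p)" using xip by simp
    show "(\<lambda>x. (e (U x))\<^sup>2) \<in> borel_measurable M" by measurable
    show "AE x in M. norm ((e (U x))\<^sup>2) \<le> norm (1 + \<bar>e (U x)\<bar> powr p)"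
      using sq_le_powr[OF p] by (auto intro!: always_eventually)
  qed
  have PXi1: "integrable PX e" unfolding PX_def using xi1 by (subst integrable_distr_eq) auto
  have PXi2: "integrable PX (\<lambda>x. (e x)\<^sup>2)" unfolding PX_def using xi2 by (subst integrable_distr_eq) auto
  have PXip: "integrable PX (\<lambda>x. \<bar>e x\<bar> powr p)" unfolding PX_def using xip by (subst integrable_distr_eq) auto
  have PXI1: "(\<integral>x. e x \<partial>PX) = 0" unfolding PX_def using xi0 by (subst integral_distr) auto
  have PXI2: "(\<integral>x. (e x)\<^sup>2 \<partial>PX) = m2" unfolding PX_def m2_def by (subst integral_distr) auto
  have PXIp: "(\<integral>x. \<bar>e x\<bar> powr p \<partial>PX) = m" unfolding PX_def m_def by (subst integral_distr) auto
  define \<psi> where "\<psi> w = \<bar>F w\<bar> powr p + C1 * m2 * (\<bar>F w\<bar> powr (p - 2) * (G w)\<^sup>2) + C2 * m * \<bar>G w\<bar> powr p" for w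
  have m0: "m \<ge> 0" "m2 \<ge> 0" "a \<ge> 0" "z \<ge> 0" by (auto simp: m_def m2_def a_def z_def)
  have inner: "(\<integral>\<^sup>+x. ennreal (\<bar>F w + e x * G w\<bar> powr p) \<partial>PX) \<le> ennreal (\<psi> w)" for w
  proof -
    define y where "y = F w"
    define c where "c = G w"
    define \<phi> where "\<phi> x = \<bar>y\<bar> powr p + (p * sgn y * \<bar>y\<bar> powr (p - 1)) * (e x * c)
            + C1 * \<bar>y\<bar> powr (p - 2) * (e x * c)\<^sup>2 + C2 * \<bar>e x * c\<bar> powr p" for x
    have pt: "\<bar>y + e x * c\<bar> powr p \<le> \<phi> x" for x
      unfolding \<phi>_def by (rule ptw[OF p C(2) pw])
    have \<phi>e: "\<phi> x = \<bar>y\<bar> powr p + (p * sgn y * \<bar>y\<bar> powr (p - 1) * c) * e x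
            + (C1 * \<bar>y\<bar> powr (p - 2) * c\<^sup>2) * (e x)\<^sup>2 + (C2 * \<bar>c\<bar> powr p) * \<bar>e x\<bar> powr p" for x
      unfolding \<phi>_def by (simp add: abs_mult powr_mult power_mult_distrib algebra_simps)
    have \<phi>i: "integrable PX \<phi>" unfolding \<phi>e using PXi1 PXi2 PXip by auto
    have \<phi>I: "(\<integral>x. \<phi> x \<partial>PX) = \<psi> w"
      unfolding \<phi>e using PXi1 PXi2 PXip
      using PX.prob_space by (simp add: PXI1 PXI2 PXIp \<psi>_def y_def c_def algebra_simps)
    have "(\<integral>\<^sup>+x. ennreal (\<bar>F w + e x * G w\<bar> powr p) \<partial>PX) \<le> (\<integral>\<^sup>+x. ennreal (\<phi> x) \<partial>PX)"
      using pt by (intro nn_integral_mono) (auto simp: y_def c_def intro: ennreal_leI)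
    also have "\<dots> = ennreal (\<integral>x. \<phi> x \<partial>PX)"
      using pt \<phi>i by (intro nn_integral_eq_integral) (auto intro: order_trans[OF powr_ge_zero])
    finally show ?thesis using \<phi>I by simp
  qed
  have p0: "p > 0" using p by simp
  have ex1: "p * ((p - 2) / p) = p - 2" "p * (2 / p) = 2" using p0 by (simp_all add: field_simps)
  have id1: "(\<bar>t\<bar> powr p) powr ((p - 2) / p) = \<bar>t\<bar> powr (p - 2)" for t :: real
    using p0 by (simp add: powr_powr ex1)
  have id2: "(\<bar>t\<bar> powr p) powr (2 / p) = t\<^sup>2" for t :: real
    using p0 by (simp add: powr_powr ex1 powr_numeral)
  have ab1: "0 \<le> (p - 2) / p" "0 \<le> 2 / p" "(p - 2) / p + 2 / p = 1" using p0 p by (simp_all add: field_simps)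
  note H = holder[of "\<lambda>x. \<bar>F (W x)\<bar> powr p" "\<lambda>x. \<bar>G (W x)\<bar> powr p" "(p - 2) / p" "2 / p", OF Fi _ Gi _ ab1]
  have Hi: "integrable M (\<lambda>x. \<bar>F (W x)\<bar> powr (p - 2) * (G (W x))\<^sup>2)"
    using H(1) by (simp add: id1 id2)
  have Hle: "(\<integral>x. \<bar>F (W x)\<bar> powr (p - 2) * (G (W x))\<^sup>2 \<partial>M) \<le> a powr ((p - 2) / p) * z powr (2 / p)"
    using H(2) by (simp add: id1 id2 a_def z_def)
  have ab2: "0 \<le> 2 / p" "0 \<le> (p - 2) / p" "2 / p + (p - 2) / p = 1" using p0 p by (simp_all add: field_simps)
  note H2 = holder[of "\<lambda>x. \<bar>e (U x)\<bar> powr p" "\<lambda>x. 1" "2 / p" "(p - 2) / p", OF xip _ _ _ ab2]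
  have m2le: "m2 \<le> m powr (2 / p)"
    using H2(2) by (simp add: id2 m2_def m_def prob_space)
  define H0 where "H0 = (\<integral>x. \<bar>F (W x)\<bar> powr (p - 2) * (G (W x))\<^sup>2 \<partial>M)"
  have H00: "H0 \<ge> 0" unfolding H0_def by (auto intro!: integral_nonneg_AE)
  have \<psi>i: "integrable M (\<lambda>x. \<psi> (W x))" unfolding \<psi>_def using Fi Gi Hi by auto
  have \<psi>I: "(\<integral>x. \<psi> (W x) \<partial>M) = a + C1 * m2 * H0 + C2 * m * z"
    unfolding \<psi>_def using Fi Gi Hi by (simp add: a_def z_def H0_def)
  have \<psi>0: "\<psi> w \<ge> 0" for w unfolding \<psi>_def using C m0 by (intro add_nonneg_nonneg mult_nonneg_nonneg) auto
  have hm[measurable]: "(\<lambda>(x, w). \<bar>F w + e x * G w\<bar> powr p) \<in> borel_measurable (N1 \<Otimes>\<^sub>M N)" by measurable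
  have "(\<integral>\<^sup>+x. ennreal (\<bar>F (W x) + e (U x) * G (W x)\<bar> powr p) \<partial>M)
      = (\<integral>\<^sup>+y. ennreal ((\<lambda>(x, w). \<bar>F w + e x * G w\<bar> powr p) y) \<partial>distr M (N1 \<Otimes>\<^sub>M N) (\<lambda>x. (U x, W x)))"
    by (subst nn_integral_distr) auto
  also have "\<dots> = (\<integral>\<^sup>+y. ennreal ((\<lambda>(x, w). \<bar>F w + e x * G w\<bar> powr p) y) \<partial>(PX \<Otimes>\<^sub>M PW))"
    unfolding D ..
  also have "\<dots> = (\<integral>\<^sup>+w. (\<integral>\<^sup>+x. ennreal (\<bar>F w + e x * G w\<bar> powr p) \<partial>PX) \<partial>PW)"
  proof -
    have eqs: "sets (PX \<Otimes>\<^sub>M PW) = sets (N1 \<Otimes>\<^sub>M N)" by (rule sets_pair_measure_cong) simp_all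
    have hm1: "(\<lambda>y. ennreal ((\<lambda>(x, w). \<bar>F w + e x * G w\<bar> powr p) y)) \<in> borel_measurable (N1 \<Otimes>\<^sub>M N)"
      by measurable
    then have hm2: "(\<lambda>y. ennreal ((\<lambda>(x, w). \<bar>F w + e x * G w\<bar> powr p) y)) \<in> borel_measurable (PX \<Otimes>\<^sub>M PW)"
      by (subst measurable_cong_sets[OF eqs refl])
    show ?thesis using PXW.nn_integral_snd[OF hm2] by (simp add: case_prod_beta)
  qed
  also have "\<dots> \<le> (\<integral>\<^sup>+w. ennreal (\<psi> w) \<partial>PW)"
    by (intro nn_integral_mono inner)
  also have "\<dots> = (\<integral>\<^sup>+x. ennreal (\<psi> (W x)) \<partial>M)"
    unfolding PW_def unfolding \<psi>_def by (subst nn_integral_distr) auto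
  also have "\<dots> = ennreal (\<integral>x. \<psi> (W x) \<partial>M)"
    using \<psi>i \<psi>0 by (intro nn_integral_eq_integral) auto
  finally have NN: "(\<integral>\<^sup>+x. ennreal (\<bar>F (W x) + e (U x) * G (W x)\<bar> powr p) \<partial>M) \<le> ennreal (\<integral>x. \<psi> (W x) \<partial>M)" .
  show Ii: "integrable M (\<lambda>x. \<bar>F (W x) + e (U x) * G (W x)\<bar> powr p)"
  proof (rule integrableI_nonneg)
    show "(\<lambda>x. \<bar>F (W x) + e (U x) * G (W x)\<bar> powr p) \<in> borel_measurable M" by measurable
    show "AE x in M. 0 \<le> \<bar>F (W x) + e (U x) * G (W x)\<bar> powr p" by simp
    show "(\<integral>\<^sup>+x. ennreal (\<bar>F (W x) + e (U x) * G (W x)\<bar> powr p) \<partial>M) < \<infinity>"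
      using NN by (simp add: le_less_trans)
  qed
  define E where "E = (\<integral>x. \<bar>F (W x) + e (U x) * G (W x)\<bar> powr p \<partial>M)"
  have E0: "E \<ge> 0" unfolding E_def by (auto intro!: integral_nonneg_AE)
  have "ennreal E = (\<integral>\<^sup>+x. ennreal (\<bar>F (W x) + e (U x) * G (W x)\<bar> powr p) \<partial>M)"
    unfolding E_def using Ii by (intro nn_integral_eq_integral[symmetric]) auto
  with NN have EN: "ennreal E \<le> ennreal (\<integral>x. \<psi> (W x) \<partial>M)" by simp
  have I0: "(\<integral>x. \<psi> (W x) \<partial>M) \<ge> 0" using \<psi>0 by (auto intro!: integral_nonneg_AE)
  have E1: "E \<le> a + C1 * m2 * H0 + C2 * m * z"
    using EN I0 \<psi>I by (simp add: ennreal_le_iff)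
  also have "\<dots> \<le> a + C1 * (m powr (2 / p)) * (a powr ((p - 2) / p) * z powr (2 / p)) + C2 * m * z"
    using C m0 m2le Hle H00 unfolding H0_def by (intro add_mono mult_mono order_refl) auto
  finally have E2: "E \<le> a + C1 * (m powr (2 / p)) * (a powr ((p - 2) / p) * z powr (2 / p)) + C2 * m * z" .
  define A where "A = a powr (2 / p)"
  define B where "B = m powr (2 / p) * z powr (2 / p)"
  have AB0: "A \<ge> 0" "B \<ge> 0" by (simp_all add: A_def B_def)
  have eA: "A powr (p / 2) = a" unfolding A_def using m0 p0 by (simp add: powr_powr)
  have eA1: "A powr (p / 2 - 1) = a powr ((p - 2) / p)"
  proof -
    have "2 / p * (p / 2 - 1) = (p - 2) / p" using p0 by (simp add: field_simps)
    then show ?thesis unfolding A_def by (simp add: powr_powr)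
  qed
  have eB: "B powr (p / 2) = m * z" unfolding B_def using m0 p0 by (simp add: powr_mult powr_powr)
  have "E \<le> A powr (p/2) + C1 * (A powr (p/2 - 1) * B) + C2 * B powr (p/2)"
    using E2 unfolding eA eA1 eB by (simp add: B_def algebra_simps)
  also have "\<dots> \<le> (A + K\<^sup>2 * B) powr (p/2)" using ab AB0 by blast
  finally have "E powr (2 / p) \<le> ((A + K\<^sup>2 * B) powr (p/2)) powr (2 / p)"
    using E0 p0 by (intro powr_mono2) auto
  also have "\<dots> = A + K\<^sup>2 * B" using AB0 p0 by (simp add: powr_powr)
  finally show "(\<integral>x. \<bar>F (W x) + e (U x) * G (W x)\<bar> powr p \<partial>M) powr (2/p)
         \<le> (\<integral>x. \<bar>F (W x)\<bar> powr p \<partial>M) powr (2/p)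
            + K\<^sup>2 * ((\<integral>x. \<bar>e (U x)\<bar> powr p \<partial>M) powr (2/p) * (\<integral>x. \<bar>G (W x)\<bar> powr p \<partial>M) powr (2/p))"
    unfolding E_def A_def B_def a_def m_def z_def .
qed



lemma Idx_finite: "finite (Idx d n)"
proof -
  have "Idx d n \<subseteq> {xs. set xs \<subseteq> {1..n} \<and> length xs = d}" by (auto simp: Idx_def)
  moreover have "finite {xs. set xs \<subseteq> {1..n} \<and> length xs = d}" by (rule finite_lists_length_eq) simp
  ultimately show ?thesis by (rule finite_subset)
qed

lemma Idx_0: "Idx 0 n = {[]}" by (auto simp: Idx_def)

lemma Idx_Suc_img:
  "Idx (Suc c) n = (\<lambda>(j, I'). I' @ [j]) ` (SIGMA j:{1..n}. {I' \<in> Idx c n. \<forall>x\<in>set I'. x < j})"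
proof
  show "(\<lambda>(j, I'). I' @ [j]) ` (SIGMA j:{1..n}. {I' \<in> Idx c n. \<forall>x\<in>set I'. x < j}) \<subseteq> Idx (Suc c) n"
    by (auto simp: Idx_def sorted_wrt_append)
  show "Idx (Suc c) n \<subseteq> (\<lambda>(j, I'). I' @ [j]) ` (SIGMA j:{1..n}. {I' \<in> Idx c n. \<forall>x\<in>set I'. x < j})"
  proof
    fix I assume I: "I \<in> Idx (Suc c) n"
    then have ne: "I \<noteq> []" by (auto simp: Idx_def)
    then have e: "I = butlast I @ [last I]" by simp
    have s: "sorted_wrt (<) (butlast I @ [last I])" "length I = Suc c" "set (butlast I @ [last I]) \<subseteq> {1..n}"
      using I e by (auto simp: Idx_def)
    have "butlast I \<in> Idx c n" using s by (auto simp: Idx_def sorted_wrt_append)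
    moreover have "\<forall>x\<in>set (butlast I). x < last I" using s(1) by (auto simp: sorted_wrt_append)
    moreover have "last I \<in> {1..n}" using s(3) by auto
    ultimately show "I \<in> (\<lambda>(j, I'). I' @ [j]) ` (SIGMA j:{1..n}. {I' \<in> Idx c n. \<forall>x\<in>set I'. x < j})"
      by (intro image_eqI[of _ _ "(last I, butlast I)"]) (auto simp: e[symmetric])
  qed
qed

lemma Idx_Suc_split:
  fixes g :: "nat list \<Rightarrow> real"
  shows "(\<Sum>I\<in>Idx (Suc c) n. g I) = (\<Sum>j\<in>{1..n}. \<Sum>I'\<in>Idx c n. (if \<forall>x\<in>set I'. x < j then g (I' @ [j]) else 0))"
proof -
  have inj: "inj_on (\<lambda>(j, I'). I' @ [j]) (SIGMA j:{1..n}. {I' \<in> Idx c n. \<forall>x\<in>set I'. x < j})"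
    by (auto simp: inj_on_def)
  have fin: "finite {I' \<in> Idx c n. \<forall>x\<in>set I'. x < j}" for j using Idx_finite by simp
  have "(\<Sum>I\<in>Idx (Suc c) n. g I) = (\<Sum>(j, I')\<in>(SIGMA j:{1..n}. {I' \<in> Idx c n. \<forall>x\<in>set I'. x < j}). g (I' @ [j]))"
    unfolding Idx_Suc_img by (subst sum.reindex[OF inj]) (simp add: case_prod_beta')
  also have "\<dots> = (\<Sum>j\<in>{1..n}. \<Sum>I'\<in>{I' \<in> Idx c n. \<forall>x\<in>set I'. x < j}. g (I' @ [j]))"
    using fin by (subst sum.Sigma) auto
  also have "\<dots> = (\<Sum>j\<in>{1..n}. \<Sum>I'\<in>Idx c n. (if \<forall>x\<in>set I'. x < j then g (I' @ [j]) else 0))"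
    by (simp add: sum.inter_filter Idx_finite)
  finally show ?thesis .
qed

lemma xiI_snoc:
  assumes "length I' = c"
  shows "xiI \<xi> (Suc c) (I' @ [j]) x = xiI \<xi> c I' x * \<xi> j (Suc c) x"
proof -
  have "{1..Suc c} = insert (Suc c) {1..c}" by auto
  then have "xiI \<xi> (Suc c) (I' @ [j]) x = \<xi> j (Suc c) x * (\<Prod>m\<in>{1..c}. \<xi> ((I' @ [j]) ! (m - 1)) m x)"
    using assms by (simp add: xiI_def nth_append)
  also have "(\<Prod>m\<in>{1..c}. \<xi> ((I' @ [j]) ! (m - 1)) m x) = xiI \<xi> c I' x"
    unfolding xiI_def using assms by (intro prod.cong refl) (auto simp: nth_append)
  finally show ?thesis by simp
qed

definition bj :: "(nat list \<Rightarrow> real) \<Rightarrow> nat \<Rightarrow> nat list \<Rightarrow> real" where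
  "bj b j I' = (if \<forall>x\<in>set I'. x < j then b (I' @ [j]) else 0)"

lemma Qd_Suc: "Qd \<xi> (Suc c) n b x = (\<Sum>j\<in>{1..n}. \<xi> j (Suc c) x * Qd \<xi> c n (bj b j) x)"
proof -
  have "Qd \<xi> (Suc c) n b x = (\<Sum>j\<in>{1..n}. \<Sum>I'\<in>Idx c n.
      (if \<forall>x\<in>set I'. x < j then b (I' @ [j]) * xiI \<xi> (Suc c) (I' @ [j]) x else 0))"
    unfolding Qd_def by (rule Idx_Suc_split)
  also have "\<dots> = (\<Sum>j\<in>{1..n}. \<Sum>I'\<in>Idx c n. \<xi> j (Suc c) x * (bj b j I' * xiI \<xi> c I' x))"
    by (intro sum.cong refl) (auto simp: bj_def xiI_snoc Idx_def)
  also have "\<dots> = (\<Sum>j\<in>{1..n}. \<xi> j (Suc c) x * Qd \<xi> c n (bj b j) x)"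
    by (simp add: Qd_def sum_distrib_left)
  finally show ?thesis .
qed

lemma norm_Suc: "(\<Sum>I\<in>Idx (Suc c) n. (b I)\<^sup>2) = (\<Sum>j\<in>{1..n}. \<Sum>I'\<in>Idx c n. (bj b j I')\<^sup>2)"
  by (subst Idx_Suc_split) (auto simp: bj_def intro!: sum.cong)

definition QF :: "nat \<Rightarrow> nat \<Rightarrow> (nat list \<Rightarrow> real) \<Rightarrow> (nat \<times> nat \<Rightarrow> real) \<Rightarrow> real" where
  "QF c n b f = (\<Sum>I\<in>Idx c n. b I * (\<Prod>m\<in>{1..c}. f (I ! (m - 1), m)))"

lemma Idx_mem: "I \<in> Idx c n \<Longrightarrow> m \<in> {1..c} \<Longrightarrow> (I ! (m - 1), m) \<in> {1..n} \<times> {1..c}"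
  by (auto simp: Idx_def) (metis Suc_le_eq Suc_pred atLeastAtMost_iff nth_mem subsetD le_imp_less_Suc not_le)+

lemma QF_Qd:
  assumes "{1..n} \<times> {1..c} \<subseteq> J"
  shows "QF c n b (restrict (\<lambda>\<kappa>. (\<lambda>(i, m). \<xi> i m) \<kappa> x) J) = Qd \<xi> c n b x"
proof -
  have mem: "\<And>I m. I \<in> Idx c n \<Longrightarrow> m \<in> {1..c} \<Longrightarrow> (I ! (m - 1), m) \<in> J"
    using Idx_mem assms by blast
  show ?thesis unfolding QF_def Qd_def xiI_def
    using mem by (intro sum.cong refl arg_cong2[where f="(*)"] prod.cong) auto
qed

lemma QF_meas:
  assumes "{1..n} \<times> {1..c} \<subseteq> J"
  shows "QF c n b \<in> borel_measurable (PiM J (\<lambda>_. borel))"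
proof -
  have mem: "\<And>I m. I \<in> Idx c n \<Longrightarrow> m \<in> {1..c} \<Longrightarrow> (I ! (m - 1), m) \<in> J"
    using Idx_mem assms by blast
  show ?thesis unfolding QF_def
  using mem by (intro borel_measurable_sum borel_measurable_times borel_measurable_const
       borel_measurable_prod measurable_component_singleton) auto
qed


lemma sum_Suc_ivl: "(\<Sum>j\<in>{1..Suc k}. f j) = (\<Sum>j\<in>{1..k}. f j) + (f (Suc k) :: real)"
proof -
  have "{1..Suc k} = insert (Suc k) {1..k}" by auto
  then show ?thesis by simp
qed



lemma (in prob_space) rows:
  fixes X :: "nat \<times> nat \<Rightarrow> 'a \<Rightarrow> real" and S Jc :: "(nat \<times> nat) set"
    and Gj :: "nat \<Rightarrow> (nat \<times> nat \<Rightarrow> real) \<Rightarrow> real"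
  assumes p: "p \<ge> 2" and C: "C1 \<ge> 0" "C2 \<ge> 1"
    and pw: "\<And>v. \<bar>1 + v\<bar> powr p \<le> 1 + p * v + C1 * v\<^sup>2 + C2 * \<bar>v\<bar> powr p"
    and ab: "\<forall>A B. A \<ge> 0 \<longrightarrow> B \<ge> 0 \<longrightarrow>
        A powr (p/2) + C1 * (A powr (p/2 - 1) * B) + C2 * B powr (p/2) \<le> (A + K\<^sup>2 * B) powr (p/2)"
    and ind: "indep_vars (\<lambda>_. borel) X S"
    and Jc: "Jc \<subseteq> S" "\<And>j. j \<in> {1..n} \<Longrightarrow> (j, c) \<in> S" "\<And>j. (j, c) \<notin> Jc"
    and Gm: "\<And>j. j \<in> {1..n} \<Longrightarrow> Gj j \<in> borel_measurable (PiM Jc (\<lambda>_. borel))"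
    and Gi: "\<And>j. j \<in> {1..n} \<Longrightarrow> integrable M (\<lambda>x. \<bar>Gj j (restrict (\<lambda>\<kappa>. X \<kappa> x) Jc)\<bar> powr p)"
    and Xi1: "\<And>j. j \<in> {1..n} \<Longrightarrow> integrable M (X (j, c))"
    and Xi0: "\<And>j. j \<in> {1..n} \<Longrightarrow> (\<integral>x. X (j, c) x \<partial>M) = 0"
    and Xip: "\<And>j. j \<in> {1..n} \<Longrightarrow> integrable M (\<lambda>x. \<bar>X (j, c) x\<bar> powr p)"
  shows "k \<le> n \<Longrightarrow> integrable M (\<lambda>x. \<bar>\<Sum>j\<in>{1..k}. X (j, c) x * Gj j (restrict (\<lambda>\<kappa>. X \<kappa> x) Jc)\<bar> powr p) \<and>
     (\<integral>x. \<bar>\<Sum>j\<in>{1..k}. X (j, c) x * Gj j (restrict (\<lambda>\<kappa>. X \<kappa> x) Jc)\<bar> powr p \<partial>M) powr (2/p)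
       \<le> K\<^sup>2 * (\<Sum>j\<in>{1..k}. (\<integral>x. \<bar>X (j, c) x\<bar> powr p \<partial>M) powr (2/p)
                 * (\<integral>x. \<bar>Gj j (restrict (\<lambda>\<kappa>. X \<kappa> x) Jc)\<bar> powr p \<partial>M) powr (2/p))"
proof (induction k)
  case 0
  then show ?case using p by simp
next
  case (Suc k)
  define k1 where "k1 = Suc k"
  have k1: "k1 \<in> {1..n}" using Suc.prems by (simp add: k1_def)
  define Jk where "Jk = Jc \<union> (\<lambda>i. (i, c)) ` {1..k}"
  have JcJk: "Jc \<subseteq> Jk" by (auto simp: Jk_def)
  have JkS: "Jk \<subseteq> S" using Jc Suc.prems by (auto simp: Jk_def)
  have nin: "(k1, c) \<notin> Jk" using Jc(3) by (auto simp: Jk_def k1_def)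
  have indv: "indep_var (PiM {(k1, c)} (\<lambda>_. borel)) (\<lambda>x. restrict (\<lambda>\<kappa>. X \<kappa> x) {(k1, c)})
                (PiM Jk (\<lambda>_. borel)) (\<lambda>x. restrict (\<lambda>\<kappa>. X \<kappa> x) Jk)"
    using nin JkS Jc(2)[OF k1] by (intro indep_var_restrict[OF ind]) auto
  define Sk where "Sk x = (\<Sum>j\<in>{1..k}. X (j, c) x * Gj j (restrict (\<lambda>\<kappa>. X \<kappa> x) Jc))" for x
  define FF where "FF f = (\<Sum>j\<in>{1..k}. f (j, c) * Gj j (restrict f Jc))" for f :: "nat \<times> nat \<Rightarrow> real"
  define GG where "GG f = Gj k1 (restrict f Jc)" for f :: "nat \<times> nat \<Rightarrow> real"
  define ee where "ee f = f (k1, c)" for f :: "nat \<times> nat \<Rightarrow> real"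
  have FW: "FF (restrict (\<lambda>\<kappa>. X \<kappa> x) Jk) = Sk x" for x
    unfolding FF_def Sk_def using JcJk
    by (intro sum.cong refl) (auto simp: Jk_def restrict_restrict Int_absorb1)
  have GW: "GG (restrict (\<lambda>\<kappa>. X \<kappa> x) Jk) = Gj k1 (restrict (\<lambda>\<kappa>. X \<kappa> x) Jc)" for x
    unfolding GG_def using JcJk by (simp add: restrict_restrict Int_absorb1)
  have eU: "ee (restrict (\<lambda>\<kappa>. X \<kappa> x) {(k1, c)}) = X (k1, c) x" for x by (simp add: ee_def)
  have em: "ee \<in> borel_measurable (PiM {(k1, c)} (\<lambda>_. borel))"
    unfolding ee_def by (rule measurable_component_singleton) simp
  have Gmc: "(\<lambda>f. Gj j (restrict f Jc)) \<in> borel_measurable (PiM Jk (\<lambda>_. borel))" if "j \<in> {1..n}" for j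
    using measurable_comp[OF measurable_restrict_subset[OF JcJk] Gm[OF that]] by (simp add: comp_def)
  have Fm: "FF \<in> borel_measurable (PiM Jk (\<lambda>_. borel))"
    unfolding FF_def using Suc.prems
    by (intro borel_measurable_sum borel_measurable_times measurable_component_singleton Gmc)
       (auto simp: Jk_def)
  have Gm2: "GG \<in> borel_measurable (PiM Jk (\<lambda>_. borel))" unfolding GG_def using Gmc[OF k1] .
  have IH: "integrable M (\<lambda>x. \<bar>Sk x\<bar> powr p)"
    "(\<integral>x. \<bar>Sk x\<bar> powr p \<partial>M) powr (2/p) \<le> K\<^sup>2 * (\<Sum>j\<in>{1..k}. (\<integral>x. \<bar>X (j, c) x\<bar> powr p \<partial>M) powr (2/p)
                 * (\<integral>x. \<bar>Gj j (restrict (\<lambda>\<kappa>. X \<kappa> x) Jc)\<bar> powr p \<partial>M) powr (2/p))"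
    using Suc.IH[OF Suc_leD[OF Suc.prems]] unfolding Sk_def by blast+
  note st = step[where p=p and ?C1.0=C1 and ?C2.0=C2 and K=K, OF p C pw ab indv em Fm Gm2]
  note st' = st[unfolded eU FW GW, OF Xi1[OF k1] Xi0[OF k1] Xip[OF k1] IH(1) Gi[OF k1]]
  have eqS: "(\<Sum>j\<in>{1..Suc k}. X (j, c) x * Gj j (restrict (\<lambda>\<kappa>. X \<kappa> x) Jc))
      = Sk x + X (k1, c) x * Gj k1 (restrict (\<lambda>\<kappa>. X \<kappa> x) Jc)" for x
    unfolding Sk_def k1_def by (rule sum_Suc_ivl)
  show ?case
    unfolding eqS unfolding sum_Suc_ivl
    using st'(1) order_trans[OF st'(2) add_mono[OF IH(2) order_refl]]
    by (simp add: k1_def algebra_simps)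
qed


lemma (in prob_space) mu_bound:
  fixes \<xi> :: "nat \<Rightarrow> nat \<Rightarrow> 'a \<Rightarrow> real"
  assumes p: "p \<ge> 2" and j: "j \<in> {1..n}"
  shows "(\<integral>x. \<bar>\<xi> j m x\<bar> powr p \<partial>M) powr (2/p) \<le> (mu M \<xi> n m p)\<^sup>2"
proof -
  have E0: "(\<integral>x. \<bar>\<xi> j m x\<bar> powr p \<partial>M) \<ge> 0" by (auto intro!: integral_nonneg_AE)
  have L0: "Lpn M p (\<xi> j m) \<ge> 0" by (simp add: Lpn_def)
  have "Lpn M p (\<xi> j m) \<le> mu M \<xi> n m p"
    unfolding mu_def using j by (intro cSUP_upper) (auto intro!: bdd_above_finite)
  then have "(Lpn M p (\<xi> j m))\<^sup>2 \<le> (mu M \<xi> n m p)\<^sup>2" using L0 by (intro power_mono) auto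
  moreover have "(Lpn M p (\<xi> j m))\<^sup>2 = (\<integral>x. \<bar>\<xi> j m x\<bar> powr p \<partial>M) powr (2/p)"
  proof -
    have "(Lpn M p (\<xi> j m))\<^sup>2 = (Lpn M p (\<xi> j m)) powr 2" using L0 by (simp add: powr_numeral)
    also have "\<dots> = (\<integral>x. \<bar>\<xi> j m x\<bar> powr p \<partial>M) powr (2/p)" unfolding Lpn_def by (simp add: powr_powr)
    finally show ?thesis .
  qed
  ultimately show ?thesis by simp
qed

lemma (in prob_space) cols:
  fixes \<xi> :: "nat \<Rightarrow> nat \<Rightarrow> 'a \<Rightarrow> real"
  assumes p: "p \<ge> 2" and C: "C1 \<ge> 0" "C2 \<ge> 1"
    and pw: "\<And>v. \<bar>1 + v\<bar> powr p \<le> 1 + p * v + C1 * v\<^sup>2 + C2 * \<bar>v\<bar> powr p"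
    and ab: "\<forall>A B. A \<ge> 0 \<longrightarrow> B \<ge> 0 \<longrightarrow>
        A powr (p/2) + C1 * (A powr (p/2 - 1) * B) + C2 * B powr (p/2) \<le> (A + K\<^sup>2 * B) powr (p/2)"
    and ind: "indep_vars (\<lambda>_. borel) (\<lambda>(i, m). \<xi> i m) ({1..n} \<times> {1..D})"
    and int1: "\<And>i m. i \<in> {1..n} \<Longrightarrow> m \<in> {1..D} \<Longrightarrow> integrable M (\<xi> i m)"
    and int0: "\<And>i m. i \<in> {1..n} \<Longrightarrow> m \<in> {1..D} \<Longrightarrow> (\<integral>x. \<xi> i m x \<partial>M) = 0"
    and intp: "\<And>i m. i \<in> {1..n} \<Longrightarrow> m \<in> {1..D} \<Longrightarrow> integrable M (\<lambda>x. \<bar>\<xi> i m x\<bar> powr p)"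
  shows "c \<le> D \<Longrightarrow> \<forall>b. integrable M (\<lambda>x. \<bar>Qd \<xi> c n b x\<bar> powr p) \<and>
     (\<integral>x. \<bar>Qd \<xi> c n b x\<bar> powr p \<partial>M) powr (2/p)
       \<le> K ^ (2 * c) * (\<Prod>m\<in>{1..c}. (mu M \<xi> n m p)\<^sup>2) * (\<Sum>I\<in>Idx c n. (b I)\<^sup>2)"
proof (induction c)
  case 0
  have p0: "p > 0" using p by simp
  have Q0: "Qd \<xi> 0 n b x = b []" for b x by (simp add: Qd_def Idx_0 xiI_def)
  have "(\<bar>b []\<bar> powr p) powr (2/p) = (b [])\<^sup>2" for b :: "nat list \<Rightarrow> real"
  proof -
    have "(\<bar>b []\<bar> powr p) powr (2/p) = \<bar>b []\<bar> powr 2" using p0 by (simp add: powr_powr)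
    also have "\<dots> = (b [])\<^sup>2" by (simp add: powr_numeral)
    finally show ?thesis .
  qed
  then show ?case by (simp add: Q0 Idx_0 prob_space)
next
  case (Suc c)
  have cD: "c \<le> D" using Suc.prems by simp
  define Jc where "Jc = {1..n} \<times> {1..c}"
  define X where "X = (\<lambda>(i, m). \<xi> i m)"
  have ind': "indep_vars (\<lambda>_. borel) X ({1..n} \<times> {1..D})" using ind by (simp add: X_def)
  show ?case
  proof
    fix b :: "nat list \<Rightarrow> real"
    define Gj where "Gj j = QF c n (bj b j)" for j
    have GQ: "Gj j (restrict (\<lambda>\<kappa>. X \<kappa> x) Jc) = Qd \<xi> c n (bj b j) x" for j x
      unfolding Gj_def X_def Jc_def by (rule QF_Qd) simp
    have IH: "integrable M (\<lambda>x. \<bar>Qd \<xi> c n (bj b j) x\<bar> powr p)"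
      "(\<integral>x. \<bar>Qd \<xi> c n (bj b j) x\<bar> powr p \<partial>M) powr (2/p)
       \<le> K ^ (2 * c) * (\<Prod>m\<in>{1..c}. (mu M \<xi> n m p)\<^sup>2) * (\<Sum>I\<in>Idx c n. (bj b j I)\<^sup>2)" for j
      using Suc.IH[OF cD] by auto
    note R = rows[where p=p and ?C1.0=C1 and ?C2.0=C2 and K=K and X=X and S="{1..n} \<times> {1..D}" and Jc=Jc
        and n=n and c="Suc c" and Gj=Gj and k=n, OF p C pw ab ind']
    have R2: "integrable M (\<lambda>x. \<bar>\<Sum>j\<in>{1..n}. X (j, Suc c) x * Gj j (restrict (\<lambda>\<kappa>. X \<kappa> x) Jc)\<bar> powr p) \<and>
     (\<integral>x. \<bar>\<Sum>j\<in>{1..n}. X (j, Suc c) x * Gj j (restrict (\<lambda>\<kappa>. X \<kappa> x) Jc)\<bar> powr p \<partial>M) powr (2/p)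
       \<le> K\<^sup>2 * (\<Sum>j\<in>{1..n}. (\<integral>x. \<bar>X (j, Suc c) x\<bar> powr p \<partial>M) powr (2/p)
                 * (\<integral>x. \<bar>Gj j (restrict (\<lambda>\<kappa>. X \<kappa> x) Jc)\<bar> powr p \<partial>M) powr (2/p))"
    proof (rule R)
      show "Jc \<subseteq> {1..n} \<times> {1..D}" using cD by (auto simp: Jc_def)
      show "\<And>j. j \<in> {1..n} \<Longrightarrow> (j, Suc c) \<in> {1..n} \<times> {1..D}" using Suc.prems by auto
      show "\<And>j. (j, Suc c) \<notin> Jc" by (auto simp: Jc_def)
      show "\<And>j. j \<in> {1..n} \<Longrightarrow> Gj j \<in> borel_measurable (PiM Jc (\<lambda>_. borel))"
        unfolding Gj_def Jc_def by (rule QF_meas) simp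
      show "\<And>j. j \<in> {1..n} \<Longrightarrow> integrable M (\<lambda>x. \<bar>Gj j (restrict (\<lambda>\<kappa>. X \<kappa> x) Jc)\<bar> powr p)"
        unfolding GQ using IH(1) .
      show "\<And>j. j \<in> {1..n} \<Longrightarrow> integrable M (X (j, Suc c))"
        using int1 Suc.prems by (simp add: X_def)
      show "\<And>j. j \<in> {1..n} \<Longrightarrow> (\<integral>x. X (j, Suc c) x \<partial>M) = 0"
        using int0 Suc.prems by (simp add: X_def)
      show "\<And>j. j \<in> {1..n} \<Longrightarrow> integrable M (\<lambda>x. \<bar>X (j, Suc c) x\<bar> powr p)"
        using intp Suc.prems by (simp add: X_def)
    qed simp
    have QS: "(\<Sum>j\<in>{1..n}. X (j, Suc c) x * Gj j (restrict (\<lambda>\<kappa>. X \<kappa> x) Jc)) = Qd \<xi> (Suc c) n b x" for x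
      unfolding GQ Qd_Suc by (simp add: X_def)
    have XS: "X (j, Suc c) x = \<xi> j (Suc c) x" for j x by (simp add: X_def)
    have QS': "(\<Sum>j\<in>{1..n}. \<xi> j (Suc c) x * Qd \<xi> c n (bj b j) x) = Qd \<xi> (Suc c) n b x" for x
      by (simp add: Qd_Suc)
    note R3 = R2[unfolded XS GQ, unfolded QS']
    show "integrable M (\<lambda>x. \<bar>Qd \<xi> (Suc c) n b x\<bar> powr p) \<and>
     (\<integral>x. \<bar>Qd \<xi> (Suc c) n b x\<bar> powr p \<partial>M) powr (2/p)
       \<le> K ^ (2 * Suc c) * (\<Prod>m\<in>{1..Suc c}. (mu M \<xi> n m p)\<^sup>2) * (\<Sum>I\<in>Idx (Suc c) n. (b I)\<^sup>2)"
    proof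
      show "integrable M (\<lambda>x. \<bar>Qd \<xi> (Suc c) n b x\<bar> powr p)" using R3 by (rule conjunct1)
      define P where "P = (\<Prod>m\<in>{1..c}. (mu M \<xi> n m p)\<^sup>2)"
      define \<mu> where "\<mu> = (mu M \<xi> n (Suc c) p)\<^sup>2"
      have P0: "P \<ge> 0" by (simp add: P_def prod_nonneg)
      have "(\<integral>x. \<bar>Qd \<xi> (Suc c) n b x\<bar> powr p \<partial>M) powr (2/p)
          \<le> K\<^sup>2 * (\<Sum>j\<in>{1..n}. (\<integral>x. \<bar>\<xi> j (Suc c) x\<bar> powr p \<partial>M) powr (2/p)
                 * (\<integral>x. \<bar>Qd \<xi> c n (bj b j) x\<bar> powr p \<partial>M) powr (2/p))" using R3 by (rule conjunct2)
      also have "\<dots> \<le> K\<^sup>2 * (\<Sum>j\<in>{1..n}. \<mu> * (K ^ (2 * c) * P * (\<Sum>I\<in>Idx c n. (bj b j I)\<^sup>2)))"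
      proof -
        have "(\<integral>x. \<bar>\<xi> j (Suc c) x\<bar> powr p \<partial>M) powr (2/p) * (\<integral>x. \<bar>Qd \<xi> c n (bj b j) x\<bar> powr p \<partial>M) powr (2/p)
            \<le> \<mu> * (K ^ (2 * c) * P * (\<Sum>I\<in>Idx c n. (bj b j I)\<^sup>2))" if j: "j \<in> {1..n}" for j
          unfolding P_def \<mu>_def by (rule mult_mono[OF mu_bound[OF p j] IH(2)]) auto
        then show ?thesis by (intro mult_left_mono sum_mono) auto
      qed
      also have "\<dots> = K ^ (2 * Suc c) * (P * \<mu>) * (\<Sum>j\<in>{1..n}. \<Sum>I\<in>Idx c n. (bj b j I)\<^sup>2)"
      proof -
        have "(\<Sum>j\<in>{1..n}. \<mu> * (K ^ (2 * c) * P * (\<Sum>I\<in>Idx c n. (bj b j I)\<^sup>2)))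
            = (\<mu> * K ^ (2 * c) * P) * (\<Sum>j\<in>{1..n}. \<Sum>I\<in>Idx c n. (bj b j I)\<^sup>2)"
          by (subst sum_distrib_left) (simp add: mult_ac)
        moreover have "K ^ (2 * Suc c) = K\<^sup>2 * K ^ (2 * c)" by (simp add: power_add[symmetric])
        ultimately show ?thesis by (simp add: mult_ac power2_eq_square)
      qed
      also have "\<dots> = K ^ (2 * Suc c) * (\<Prod>m\<in>{1..Suc c}. (mu M \<xi> n m p)\<^sup>2) * (\<Sum>I\<in>Idx (Suc c) n. (b I)\<^sup>2)"
      proof -
        have "{1..Suc c} = insert (Suc c) {1..c}" by auto
        then have "(\<Prod>m\<in>{1..Suc c}. (mu M \<xi> n m p)\<^sup>2) = P * \<mu>" by (simp add: P_def \<mu>_def)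
        then show ?thesis by (simp add: norm_Suc)
      qed
      finally show "(\<integral>x. \<bar>Qd \<xi> (Suc c) n b x\<bar> powr p \<partial>M) powr (2/p)
       \<le> K ^ (2 * Suc c) * (\<Prod>m\<in>{1..Suc c}. (mu M \<xi> n m p)\<^sup>2) * (\<Sum>I\<in>Idx (Suc c) n. (b I)\<^sup>2)" .
    qed
  qed
qed


theorem theorem7:
  fixes M :: "'a measure" and \<xi> :: "nat \<Rightarrow> nat \<Rightarrow> 'a \<Rightarrow> real"
    and d n :: nat and p :: real
  assumes "prob_space M"
    and "d \<ge> 1" and "p \<ge> 2"
    and "\<And>i m. i \<in> {1..n} \<Longrightarrow> m \<in> {1..d} \<Longrightarrow> \<xi> i m \<in> borel_measurable M"
    and "prob_space.indep_vars M (\<lambda>_. borel) (\<lambda>(i, m). \<xi> i m) ({1..n} \<times> {1..d})"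
    and "\<And>i m. i \<in> {1..n} \<Longrightarrow> m \<in> {1..d} \<Longrightarrow> integrable M (\<xi> i m)"
    and "\<And>i m. i \<in> {1..n} \<Longrightarrow> m \<in> {1..d} \<Longrightarrow> (\<integral>x. \<xi> i m x \<partial>M) = 0"
    and "\<And>i m. i \<in> {1..n} \<Longrightarrow> m \<in> {1..d} \<Longrightarrow> integrable M (\<lambda>x. \<bar>\<xi> i m x\<bar> powr p)"
    and "b \<in> Bset d n"
  shows "Lpn M p (Qd \<xi> d n b) \<le> 2 powr (real d / 2) * (p ^ d / ln p) * (\<Prod>m\<in>{1..d}. mu M \<xi> n m p)"
proof -
  interpret prob_space M by (rule assms(1))
  have p: "p \<ge> 2" and d1: "d \<ge> 1" using assms(2,3) by auto
  from constants[OF p] obtain C1 C2 where CC: "C1 \<ge> 0 \<and> C2 \<ge> 1 \<and>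
     (\<forall>v. \<bar>1 + v\<bar> powr p \<le> 1 + p * v + C1 * v\<^sup>2 + C2 * \<bar>v\<bar> powr p) \<and>
     (\<forall>A B. A \<ge> 0 \<longrightarrow> B \<ge> 0 \<longrightarrow>
        A powr (p/2) + C1 * (A powr (p/2 - 1) * B) + C2 * B powr (p/2) \<le> (A + (Kc p)\<^sup>2 * B) powr (p/2))"
    by (elim exE) (erule that)
  have C: "C1 \<ge> 0" "C2 \<ge> 1" using CC by (rule conjunct1, rule conjunct1[OF conjunct2])
  have pw: "\<forall>v. \<bar>1 + v\<bar> powr p \<le> 1 + p * v + C1 * v\<^sup>2 + C2 * \<bar>v\<bar> powr p"
    using CC by (rule conjunct1[OF conjunct2[OF conjunct2]])
  have ab: "\<forall>A B. A \<ge> 0 \<longrightarrow> B \<ge> 0 \<longrightarrow>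
        A powr (p/2) + C1 * (A powr (p/2 - 1) * B) + C2 * B powr (p/2) \<le> (A + (Kc p)\<^sup>2 * B) powr (p/2)"
    using CC by (rule conjunct2[OF conjunct2[OF conjunct2]])
  define K where "K = Kc p"
  have cl: "integrable M (\<lambda>x. \<bar>Qd \<xi> d n b x\<bar> powr p) \<and>
     (\<integral>x. \<bar>Qd \<xi> d n b x\<bar> powr p \<partial>M) powr (2/p)
       \<le> K ^ (2 * d) * (\<Prod>m\<in>{1..d}. (mu M \<xi> n m p)\<^sup>2) * (\<Sum>I\<in>Idx d n. (b I)\<^sup>2)"
  proof -
    note c0 = cols[where p=p and ?C1.0=C1 and ?C2.0=C2 and K="Kc p" and D=d and n=n and \<xi>=\<xi> and c=d]
    note c1 = c0[OF p C(1) C(2) pw[rule_format] ab assms(5) assms(6) assms(7) assms(8) order_refl]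
    show ?thesis unfolding K_def by (rule spec[OF c1])
  qed
  have nb: "(\<Sum>I\<in>Idx d n. (b I)\<^sup>2) = 1" using assms(9) by (simp add: Bset_def)
  have n1: "1 \<le> n"
  proof (rule ccontr)
    assume "\<not> 1 \<le> n"
    then have "n = 0" by simp
    have "Idx d n = {}"
    proof (rule ccontr)
      assume "Idx d n \<noteq> {}"
      then obtain I where I: "I \<in> Idx d n" by blast
      then have "I \<noteq> []" "set I \<subseteq> {1..n}" using d1 by (auto simp: Idx_def)
      then show False using \<open>n = 0\<close> by (cases I) auto
    qed
    then show False using nb by simp
  qed
  have mu0: "mu M \<xi> n m p \<ge> 0" for m
  proof -
    have "Lpn M p (\<xi> 1 m) \<le> mu M \<xi> n m p"
      unfolding mu_def using n1 by (intro cSUP_upper) (auto intro!: bdd_above_finite)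
    moreover have "Lpn M p (\<xi> 1 m) \<ge> 0" by (simp add: Lpn_def)
    ultimately show ?thesis by linarith
  qed
  define P where "P = (\<Prod>m\<in>{1..d}. mu M \<xi> n m p)"
  have P0: "P \<ge> 0" unfolding P_def using mu0 by (simp add: prod_nonneg)
  have K0: "K > 0" unfolding K_def Kc_def using p by simp
  define E where "E = (\<integral>x. \<bar>Qd \<xi> d n b x\<bar> powr p \<partial>M)"
  have E0: "E \<ge> 0" unfolding E_def by (auto intro!: integral_nonneg_AE)
  have L0: "Lpn M p (Qd \<xi> d n b) \<ge> 0" by (simp add: Lpn_def)
  have clb: "E powr (2/p) \<le> K ^ (2 * d) * (\<Prod>m\<in>{1..d}. (mu M \<xi> n m p)\<^sup>2) * 1"
    using conjunct2[OF cl] unfolding E_def nb .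
  have L2: "(Lpn M p (Qd \<xi> d n b))\<^sup>2 = E powr (2/p)"
  proof -
    have "(Lpn M p (Qd \<xi> d n b))\<^sup>2 = (Lpn M p (Qd \<xi> d n b)) powr 2" using L0 by (simp add: powr_numeral)
    also have "\<dots> = E powr (1/p * 2)" unfolding Lpn_def E_def by (rule powr_powr)
    also have "1/p * 2 = 2/p" by simp
    finally show ?thesis .
  qed
  have KP: "K ^ (2 * d) * (\<Prod>m\<in>{1..d}. (mu M \<xi> n m p)\<^sup>2) = (K ^ d * P)\<^sup>2"
  proof -
    have "P\<^sup>2 = (\<Prod>m\<in>{1..d}. (mu M \<xi> n m p)\<^sup>2)" unfolding P_def by (rule prod_power_distrib)
    moreover have "K ^ (2 * d) = (K ^ d)\<^sup>2" by (rule power_even_eq)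
    ultimately show ?thesis by (simp add: power_mult_distrib)
  qed
  have "(Lpn M p (Qd \<xi> d n b))\<^sup>2 \<le> (K ^ d * P)\<^sup>2" using clb unfolding L2 KP by simp
  moreover have "0 \<le> K ^ d * P" using K0 P0 by simp
  ultimately have L1: "Lpn M p (Qd \<xi> d n b) \<le> K ^ d * P" by (rule power2_le_imp_le)
  have Kd: "K ^ d \<le> 2 powr (real d / 2) * (p ^ d / ln p)"
  proof -
    define Lm where "Lm = max 1 (ln p)"
    have Lm1: "Lm \<ge> 1" "Lm \<ge> ln p" by (auto simp: Lm_def)
    have lnp: "ln p > 0" using p by simp
    have s2: "sqrt 2 ^ d = 2 powr (real d / 2)"
    proof -
      have "sqrt 2 ^ d = (2 powr (1/2)) ^ d" by (simp add: powr_half_sqrt)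
      also have "\<dots> = (2 powr (1/2)) powr (real d)" by (rule powr_realpow[symmetric]) simp
      also have "\<dots> = 2 powr (1/2 * real d)" by (rule powr_powr)
      also have "1/2 * real d = real d / 2" by simp
      finally show ?thesis .
    qed
    have Ke: "K ^ d = 2 powr (real d / 2) * (p ^ d / Lm ^ d)"
      unfolding K_def Kc_def Lm_def s2[symmetric] by (simp add: power_divide power_mult_distrib)
    have "Lm ^ 1 \<le> Lm ^ d" using Lm1 d1 by (intro power_increasing) auto
    then have "ln p \<le> Lm ^ d" using Lm1 by simp
    moreover have "Lm ^ d > 0" using Lm1 by simp
    then have pos: "0 < Lm ^ d * ln p" using lnp by simp
    ultimately have "p ^ d / Lm ^ d \<le> p ^ d / ln p" using p by (intro divide_left_mono[OF _ _ pos]) auto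
    then show ?thesis unfolding Ke by (intro mult_left_mono) auto
  qed
  have "K ^ d * P \<le> 2 powr (real d / 2) * (p ^ d / ln p) * P" using Kd P0 by (rule mult_right_mono)
  with L1 show ?thesis unfolding P_def by linarith
qed


end
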